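(* Let $n\in\mathbb{N}_{\geq1}\cup\{\infty\}$ and integers $h,r\geq1$ with $h+r\leq n$. Let ${\bf z}_h=(z_1,\ldots,z_h)$ and ${\bf t}_r=(t_1,\ldots,t_r)$ be indeterminates. Then in $\bigwedge^{h+r}V_n[[{\bf z}_h,{\bf t}_r]]$, $$\sigma_+({\bf z}_h)\mathbf{X}^h(0)\wedge\sigma_+({\bf t}_r)\mathbf{X}^r(0)=\prod_{i=1}^h\prod_{j=1}^r(z_i-t_j)\;\sigma_+({\bf z}_h,{\bf t}_r)\mathbf{X}^{h+r}(0),$$ where $\sigma_+({\bf z}_h,{\bf t}_r)=\sigma_+(z_1)\cdots\sigma_+(z_h)\sigma_+(t_1)\cdots\sigma_+(t_r)$.
   Context: For $n$ finite, $V_n=\mathbb{Q}[X]/(X^n)$ with basis $X^0,\ldots,X^{n-1}$; $V_\infty=\mathbb{Q}[X]$. $\mathbf{X}^m(0)=X^{m-1}\wedge\cdots\wedge X^0$. For an endomorphism $A$ of $V_n$, $\mathrm{tr}(A)$ is the derivation of $(\bigwedge V_n,\wedge)$ extending $A$; $X$ denotes multiplication by $X$; $\sigma_+(z)=\exp(\sum_{j\geq1}\mathrm{tr}(X^j)z^j/j)$, a $\wedge$-algebra endomorphism with $\sigma_+(z)X^i=\sum_{k\geq0}X^{i+k}z^k$; $\sigma_+({\bf z}_h)=\sigma_+(z_1)\cdots\sigma_+(z_h)$ and similarly for ${\bf t}_r$. *)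

theory Defs
  imports Main "HOL-Library.Poly_Mapping" "HOL-Library.Groups_Big_Fun" "HOL-Library.Extended_Nat"
begin

text \<open>An element of the exterior algebra of V_n with coefficients in the formal power
  series ring Q[[x_0, x_1, ...]] is encoded by its coefficient function:
  F mu S is the coefficient of the monomial x^mu times the basis element X^S, where for a
  finite set S = {s_1 > ... > s_k} we write X^S = X^{s_1} wedge ... wedge X^{s_k}.
  Only finite S contained in {m. m < n} are ever used.\<close>

type_synonym ser = "(nat \<Rightarrow>\<^sub>0 nat) \<Rightarrow> nat set \<Rightarrow> rat"

text \<open>Sign of X^S wedge X^T relative to X^(S union T), for disjoint S, T.\<close>
definition wsign :: "nat set \<Rightarrow> nat set \<Rightarrow> rat" where
  "wsign S T = (-1) ^ card {(a, b). a \<in> S \<and> b \<in> T \<and> a < b}"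

definition wedge :: "ser \<Rightarrow> ser \<Rightarrow> ser" where
  "wedge A B mu U = (if finite U then
      (\<Sum>(\<alpha>, \<beta>) \<in> {(\<alpha>, \<beta>). \<alpha> + \<beta> = mu}. \<Sum>S \<in> Pow U. wsign S (U - S) * A \<alpha> S * B \<beta> (U - S))
    else 0)"

definition wunit :: ser where
  "wunit mu U = (if mu = 0 \<and> U = {} then 1 else 0)"

fun wedge_list :: "ser list \<Rightarrow> ser" where
  "wedge_list [] = wunit"
| "wedge_list (A # As) = wedge A (wedge_list As)"

definition mono :: "(nat \<Rightarrow>\<^sub>0 nat) \<Rightarrow> ser" where
  "mono \<alpha> mu U = (if mu = \<alpha> \<and> U = {} then 1 else 0)"

definition var :: "nat \<Rightarrow> ser" where
  "var v = mono (Poly_Mapping.single v 1)"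

definition ssub :: "ser \<Rightarrow> ser \<Rightarrow> ser" where
  "ssub A B mu U = A mu U - B mu U"

definition gen :: "enat \<Rightarrow> nat \<Rightarrow> ser" where
  "gen n m mu U = (if mu = 0 \<and> U = {m} \<and> enat m < n then 1 else 0)"

text \<open>X^k(0) = X^(k-1) wedge ... wedge X^0.\<close>
definition Xvac :: "enat \<Rightarrow> nat \<Rightarrow> ser" where
  "Xvac n k = wedge_list (map (gen n) (rev [0..<k]))"

text \<open>sigma_+(x_v) X^i = sum_k X^(i+k) x_v^k in V_n[[x]].\<close>
definition sigma1 :: "enat \<Rightarrow> nat \<Rightarrow> nat \<Rightarrow> ser" where
  "sigma1 n v i mu U = (if \<exists>m. U = {m} \<and> enat m < n \<and> i \<le> m \<and> mu = Poly_Mapping.single v (m - i)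
                        then 1 else 0)"

text \<open>sigma_+(x_v) as the Q[[x]]-linear wedge-algebra endomorphism determined by sigma1:
  sigma(x^alpha X^{s_1} wedge ... wedge X^{s_k}) = x^alpha sigma(X^{s_1}) wedge ... wedge sigma(X^{s_k}).
  Each coefficient of the result is a finite sum (Sum_any sums over the finite support).\<close>
definition sigma :: "enat \<Rightarrow> nat \<Rightarrow> ser \<Rightarrow> ser" where
  "sigma n v F mu U = Sum_any (\<lambda>(\<alpha>, S). if finite S then
      F \<alpha> S * wedge (mono \<alpha>) (wedge_list (map (sigma1 n v) (rev (sorted_list_of_set S)))) mu U
    else 0)"

definition sigmas :: "enat \<Rightarrow> nat list \<Rightarrow> ser \<Rightarrow> ser" where
  "sigmas n vs F = foldr (sigma n) vs F"

end

theory Submission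
  imports Defs "HOL-Library.Function_Algebras" "HOL-Library.FuncSet"
begin

definition dv :: "(nat \<Rightarrow>\<^sub>0 nat) \<Rightarrow> (nat \<Rightarrow>\<^sub>0 nat) set" where
  "dv mu = {a. \<exists>b. a + b = mu}"

lemma dv_finite: "finite (dv mu)"
proof -
  have le: "Poly_Mapping.lookup a k \<le> Poly_Mapping.lookup mu k" if "a \<in> dv mu" for a k
    using that by (auto simp: dv_def lookup_add)
  have z: "Poly_Mapping.lookup a k = 0" if "a \<in> dv mu" "k \<notin> Poly_Mapping.keys mu" for a k
    using le[OF that(1), of k] that(2) by (simp add: in_keys_iff)
  let ?f = "\<lambda>a::nat \<Rightarrow>\<^sub>0 nat. restrict (Poly_Mapping.lookup a) (Poly_Mapping.keys mu)"
  have inj: "inj_on ?f (dv mu)"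
  proof (rule inj_onI)
    fix a b assume "a \<in> dv mu" "b \<in> dv mu" "?f a = ?f b"
    then show "a = b"
      apply (intro poly_mapping_eqI)
      subgoal for k proof -
        have "?f a k = ?f b k" using \<open>?f a = ?f b\<close> by simp
        then show ?thesis using z[of a k] z[of b k] \<open>a \<in> dv mu\<close> \<open>b \<in> dv mu\<close>
          by (cases "k \<in> Poly_Mapping.keys mu") auto
      qed
      done
  qed
  have "?f ` dv mu \<subseteq> PiE (Poly_Mapping.keys mu) (\<lambda>k. {..Poly_Mapping.lookup mu k})"
  proof (rule image_subsetI)
    fix a assume a: "a \<in> dv mu"
    show "?f a \<in> PiE (Poly_Mapping.keys mu) (\<lambda>k. {..Poly_Mapping.lookup mu k})"
      using le[OF a] by (simp add: PiE_iff)
  qed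
  then have "finite (?f ` dv mu)"
    by (rule finite_subset) (simp add: finite_PiE)
  then show ?thesis using inj by (rule finite_imageD)
qed

lemma dv_sub: "a + b = mu \<Longrightarrow> mu - a = (b::nat\<Rightarrow>\<^sub>0nat)"
  by (drule sym) simp

lemma dv_iff: "a \<in> dv mu \<longleftrightarrow> a + (mu - a) = mu"
proof
  assume "a \<in> dv mu" then obtain b where "a + b = mu" by (auto simp: dv_def)
  then show "a + (mu - a) = mu" using dv_sub[OF \<open>a + b = mu\<close>] by simp
next
  assume "a + (mu - a) = mu" then show "a \<in> dv mu" unfolding dv_def by blast
qed

lemma pairs_eq: "{(a, b). a + b = mu} = (\<lambda>a. (a, mu - a)) ` dv mu"
proof (rule set_eqI)
  fix p :: "(nat \<Rightarrow>\<^sub>0 nat) \<times> (nat \<Rightarrow>\<^sub>0 nat)"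
  show "p \<in> {(a, b). a + b = mu} \<longleftrightarrow> p \<in> (\<lambda>a. (a, mu - a)) ` dv mu"
  proof (cases p)
    case (Pair a b)
    show ?thesis
    proof
      assume "p \<in> {(a, b). a + b = mu}"
      then have "a + b = mu" using Pair by simp
      then have "mu - a = b" "a \<in> dv mu" using dv_sub unfolding dv_def by auto
      then show "p \<in> (\<lambda>a. (a, mu - a)) ` dv mu" using Pair by (intro rev_image_eqI) auto
    next
      assume "p \<in> (\<lambda>a. (a, mu - a)) ` dv mu"
      then show "p \<in> {(a, b). a + b = mu}" using Pair dv_iff by auto
    qed
  qed
qed

lemma wedge_alt: "wedge A B mu U = (if finite U then
   (\<Sum>a\<in>dv mu. \<Sum>S\<in>Pow U. wsign S (U - S) * A a S * B (mu - a) (U - S)) else 0)"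
proof -
  have "inj_on (\<lambda>a. (a, mu - a)) (dv mu)" by (auto intro: inj_onI)
  then show ?thesis unfolding wedge_def pairs_eq by (simp add: sum.reindex)
qed

definition E :: "(nat \<Rightarrow>\<^sub>0 nat) \<Rightarrow> nat set \<Rightarrow> ser" where
  "E a S = (\<lambda>mu U. if mu = a \<and> U = S then 1 else 0)"

definition sc :: "rat \<Rightarrow> ser \<Rightarrow> ser" where
  "sc k F = (\<lambda>mu U. k * F mu U)"

definition lin_lf :: "(ser \<Rightarrow> ser) \<Rightarrow> bool" where
  "lin_lf L \<longleftrightarrow> (\<forall>mu U. \<exists>Q. finite Q \<and>
     (\<forall>F. L F mu U = (\<Sum>q\<in>Q. F (fst q) (snd q) * L (E (fst q) (snd q)) mu U)))"

lemma lin_lfI: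
  assumes "\<And>mu U. \<exists>Q. finite Q \<and>
     (\<forall>F. L F mu U = (\<Sum>q\<in>Q. F (fst q) (snd q) * L (E (fst q) (snd q)) mu U))"
  shows "lin_lf L"
  using assms unfolding lin_lf_def by blast

lemma lin_lf_sup:
  assumes "lin_lf L"
  obtains Q where "finite Q" "\<And>Q' F. finite Q' \<Longrightarrow> Q \<subseteq> Q' \<Longrightarrow>
     L F mu U = (\<Sum>q\<in>Q'. F (fst q) (snd q) * L (E (fst q) (snd q)) mu U)"
proof -
  obtain Q where Q0: "finite Q" "\<forall>F. L F mu U = (\<Sum>q\<in>Q. F (fst q) (snd q) * L (E (fst q) (snd q)) mu U)"
    using assms[unfolded lin_lf_def, rule_format, of mu U] by (elim exE conjE)
  note Q = Q0(1) Q0(2)[rule_format]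
  have z: "L (E (fst q) (snd q)) mu U = 0" if "q \<notin> Q" for q
  proof -
    have "L (E (fst q) (snd q)) mu U = (\<Sum>q'\<in>Q. E (fst q) (snd q) (fst q') (snd q') * L (E (fst q') (snd q')) mu U)"
      by (rule Q(2))
    also have "\<dots> = 0"
    proof (rule sum.neutral, rule ballI)
      fix q' assume "q' \<in> Q"
      then have "q' \<noteq> q" using that by auto
      then have "E (fst q) (snd q) (fst q') (snd q') = 0" unfolding E_def by (auto simp: prod_eq_iff)
      then show "E (fst q) (snd q) (fst q') (snd q') * L (E (fst q') (snd q')) mu U = 0" by simp
    qed
    finally show ?thesis .
  qed
  show ?thesis
  proof (rule that[OF Q(1)])
    fix Q' F assume "finite Q'" "Q \<subseteq> Q'"
    then have "(\<Sum>q\<in>Q'. F (fst q) (snd q) * L (E (fst q) (snd q)) mu U)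
        = (\<Sum>q\<in>Q. F (fst q) (snd q) * L (E (fst q) (snd q)) mu U)"
      by (intro sum.mono_neutral_right) (auto simp: z)
    then show "L F mu U = (\<Sum>q\<in>Q'. F (fst q) (snd q) * L (E (fst q) (snd q)) mu U)"
      using Q(2)[of F] by (rule trans[rotated, OF sym])
  qed
qed

lemma lin_lf_eq:
  assumes "lin_lf L" "lin_lf M" "\<And>a S. L (E a S) = M (E a S)"
  shows "L F = M F"
proof (intro ext)
  fix mu U
  obtain Q1 where Q1: "finite Q1" "\<And>Q' F. finite Q' \<Longrightarrow> Q1 \<subseteq> Q' \<Longrightarrow>
     L F mu U = (\<Sum>q\<in>Q'. F (fst q) (snd q) * L (E (fst q) (snd q)) mu U)"
    by (rule lin_lf_sup[OF assms(1)]) blast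
  obtain Q2 where Q2: "finite Q2" "\<And>Q' F. finite Q' \<Longrightarrow> Q2 \<subseteq> Q' \<Longrightarrow>
     M F mu U = (\<Sum>q\<in>Q'. F (fst q) (snd q) * M (E (fst q) (snd q)) mu U)"
    by (rule lin_lf_sup[OF assms(2)]) blast
  have "L F mu U = (\<Sum>q\<in>Q1 \<union> Q2. F (fst q) (snd q) * L (E (fst q) (snd q)) mu U)"
    using Q1(2)[of "Q1 \<union> Q2" F] Q1(1) Q2(1) by simp
  also have "\<dots> = (\<Sum>q\<in>Q1 \<union> Q2. F (fst q) (snd q) * M (E (fst q) (snd q)) mu U)"
    using assms(3) by simp
  also have "\<dots> = M F mu U" using Q2(2)[of "Q1 \<union> Q2" F] Q1(1) Q2(1) by simp
  finally show "L F mu U = M F mu U" .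
qed

lemma lin_lf_comp:
  assumes "lin_lf L" "lin_lf M"
  shows "lin_lf (\<lambda>F. L (M F))"
proof (rule lin_lfI)
  fix mu U
  obtain QL where QL0: "finite QL" "\<forall>F. L F mu U = (\<Sum>p\<in>QL. F (fst p) (snd p) * L (E (fst p) (snd p)) mu U)"
    using assms(1)[unfolded lin_lf_def, rule_format, of mu U] by (elim exE conjE)
  note QL = QL0(1) QL0(2)[rule_format]
  have "\<forall>p. \<exists>Q. finite Q \<and> (\<forall>Q' F. finite Q' \<longrightarrow> Q \<subseteq> Q' \<longrightarrow>
     M F (fst p) (snd p) = (\<Sum>q\<in>Q'. F (fst q) (snd q) * M (E (fst q) (snd q)) (fst p) (snd p)))"
  proof
    fix p
    obtain Q where "finite Q" "\<And>Q' F. finite Q' \<Longrightarrow> Q \<subseteq> Q' \<Longrightarrow>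
     M F (fst p) (snd p) = (\<Sum>q\<in>Q'. F (fst q) (snd q) * M (E (fst q) (snd q)) (fst p) (snd p))"
      by (rule lin_lf_sup[OF assms(2)]) blast
    then show "\<exists>Q. finite Q \<and> (\<forall>Q' F. finite Q' \<longrightarrow> Q \<subseteq> Q' \<longrightarrow>
     M F (fst p) (snd p) = (\<Sum>q\<in>Q'. F (fst q) (snd q) * M (E (fst q) (snd q)) (fst p) (snd p)))" by blast
  qed
  from choice[OF this] obtain QM where QMa: "\<forall>p. finite (QM p) \<and> (\<forall>Q' F. finite Q' \<longrightarrow> QM p \<subseteq> Q' \<longrightarrow>
     M F (fst p) (snd p) = (\<Sum>q\<in>Q'. F (fst q) (snd q) * M (E (fst q) (snd q)) (fst p) (snd p)))"
    by blast
  have QM: "\<And>p. finite (QM p)" "\<And>p Q' F. finite Q' \<Longrightarrow> QM p \<subseteq> Q' \<Longrightarrow>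
     M F (fst p) (snd p) = (\<Sum>q\<in>Q'. F (fst q) (snd q) * M (E (fst q) (snd q)) (fst p) (snd p))"
    using QMa by blast+
  define Qc where "Qc = (\<Union>p\<in>QL. QM p)"
  have fQc: "finite Qc" unfolding Qc_def using QL QM by auto
  have sub: "p \<in> QL \<Longrightarrow> QM p \<subseteq> Qc" for p unfolding Qc_def by auto
  show "\<exists>Q. finite Q \<and> (\<forall>F. L (M F) mu U = (\<Sum>q\<in>Q. F (fst q) (snd q) * L (M (E (fst q) (snd q))) mu U))"
  proof (intro exI conjI allI)
    show "finite Qc" by (rule fQc)
    fix F
    have "L (M F) mu U = (\<Sum>p\<in>QL. M F (fst p) (snd p) * L (E (fst p) (snd p)) mu U)" by (rule QL(2))
    also have "\<dots> = (\<Sum>p\<in>QL. (\<Sum>q\<in>Qc. F (fst q) (snd q) * M (E (fst q) (snd q)) (fst p) (snd p)) * L (E (fst p) (snd p)) mu U)"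
      by (intro sum.cong refl) (simp add: QM(2)[OF fQc sub])
    also have "\<dots> = (\<Sum>p\<in>QL. \<Sum>q\<in>Qc. F (fst q) (snd q) * (M (E (fst q) (snd q)) (fst p) (snd p) * L (E (fst p) (snd p)) mu U))"
      by (simp only: sum_distrib_right mult.assoc)
    also have "\<dots> = (\<Sum>q\<in>Qc. \<Sum>p\<in>QL. F (fst q) (snd q) * (M (E (fst q) (snd q)) (fst p) (snd p) * L (E (fst p) (snd p)) mu U))"
      by (rule sum.swap)
    also have "\<dots> = (\<Sum>q\<in>Qc. F (fst q) (snd q) * (\<Sum>p\<in>QL. M (E (fst q) (snd q)) (fst p) (snd p) * L (E (fst p) (snd p)) mu U))"
      by (simp only: sum_distrib_left)
    also have "\<dots> = (\<Sum>q\<in>Qc. F (fst q) (snd q) * L (M (E (fst q) (snd q))) mu U)"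
      by (simp add: QL(2)[symmetric])
    finally show "L (M F) mu U = (\<Sum>q\<in>Qc. F (fst q) (snd q) * L (M (E (fst q) (snd q))) mu U)" .
  qed
qed

lemma lin_lf_rep:
  assumes "lin_lf L"
  obtains Q where "finite Q" "\<And>F. L F mu U = (\<Sum>q\<in>Q. F (fst q) (snd q) * L (E (fst q) (snd q)) mu U)"
proof -
  obtain Q where Q0: "finite Q" "\<forall>F. L F mu U = (\<Sum>q\<in>Q. F (fst q) (snd q) * L (E (fst q) (snd q)) mu U)"
    using assms[unfolded lin_lf_def, rule_format, of mu U] by (elim exE conjE)
  then show ?thesis using that by blast
qed

lemma lin_lf_diff:
  assumes "lin_lf L" shows "L (A - B) = L A - L B"
proof (intro ext)
  fix mu U
  obtain Q where Q0: "finite Q" "\<forall>F. L F mu U = (\<Sum>q\<in>Q. F (fst q) (snd q) * L (E (fst q) (snd q)) mu U)"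
    using assms[unfolded lin_lf_def, rule_format, of mu U] by (elim exE conjE)
  note Q = Q0(1) Q0(2)[rule_format]
  show "L (A - B) mu U = (L A - L B) mu U"
    unfolding minus_apply Q(2)[of "A - B"] Q(2)[of A] Q(2)[of B]
    by (simp add: sum_subtractf left_diff_distrib)
qed

lemma lin_lf_add:
  assumes "lin_lf L" shows "L (A + B) = L A + L B"
proof (intro ext)
  fix mu U
  obtain Q where Q0: "finite Q" "\<forall>F. L F mu U = (\<Sum>q\<in>Q. F (fst q) (snd q) * L (E (fst q) (snd q)) mu U)"
    using assms[unfolded lin_lf_def, rule_format, of mu U] by (elim exE conjE)
  note Q = Q0(1) Q0(2)[rule_format]
  show "L (A + B) mu U = (L A + L B) mu U"
    unfolding plus_fun_apply Q(2)[of "A + B"] Q(2)[of A] Q(2)[of B]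
    by (simp add: sum.distrib distrib_right)
qed

lemma lin_lf_zero: "lin_lf L \<Longrightarrow> L 0 = 0"
  using lin_lf_diff[of L 0 0] by simp

lemma lin_lf_sc:
  assumes "lin_lf L" shows "L (sc k A) = sc k (L A)"
proof (intro ext)
  fix mu U
  obtain Q where Q0: "finite Q" "\<forall>F. L F mu U = (\<Sum>q\<in>Q. F (fst q) (snd q) * L (E (fst q) (snd q)) mu U)"
    using assms[unfolded lin_lf_def, rule_format, of mu U] by (elim exE conjE)
  note Q = Q0(1) Q0(2)[rule_format]
  show "L (sc k A) mu U = sc k (L A) mu U"
    unfolding sc_def Q(2)[of "\<lambda>mu U. k * A mu U"] Q(2)[of A]
    by (simp add: sum_distrib_left mult.assoc)
qed

lemma lin_lf_uminus: "lin_lf L \<Longrightarrow> L (- A) = - L A"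
  using lin_lf_diff[of L 0 A] lin_lf_zero[of L] by simp

lemma lin_lf_pw: "lin_lf (\<lambda>F mu U. k mu U * F mu U)"
proof (rule lin_lfI)
  fix mu U
  show "\<exists>Q. finite Q \<and> (\<forall>F. k mu U * F mu U = (\<Sum>q\<in>Q. F (fst q) (snd q) * (k mu U * E (fst q) (snd q) mu U)))"
    by (rule exI[of _ "{(mu, U)}"]) (simp add: E_def)
qed

lemma lin_lf_id: "lin_lf (\<lambda>F. F)"
  using lin_lf_pw[of "\<lambda>_ _. 1"] by simp

lemma sum_single2:
  assumes "finite A" "finite B" "\<And>x y. x \<in> A \<Longrightarrow> y \<in> B \<Longrightarrow> x \<noteq> a \<or> y \<noteq> b \<Longrightarrow> f x y = (0::rat)"
  shows "(\<Sum>x\<in>A. \<Sum>y\<in>B. f x y) = (if a \<in> A \<and> b \<in> B then f a b else 0)"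
proof -
  have inner: "(\<Sum>y\<in>B. f x y) = (if x = a then (if b \<in> B then f a b else 0) else 0)" if "x \<in> A" for x
  proof (cases "x = a")
    case True
    have "(\<Sum>y\<in>B. f x y) = (\<Sum>y\<in>B. if y = b then f a y else 0)"
      using True assms(3) that by (intro sum.cong) auto
    also have "\<dots> = (if b \<in> B then f a b else 0)" using assms(2) by (simp add: sum.delta)
    finally show ?thesis using True by simp
  next
    case False
    then show ?thesis using assms(3) that by simp
  qed
  have "(\<Sum>x\<in>A. \<Sum>y\<in>B. f x y) = (\<Sum>x\<in>A. (if x = a then (if b \<in> B then f a b else 0) else 0))"
    by (intro sum.cong refl inner)
  then show ?thesis using assms(1) by (simp add: sum.delta)
qed

lemma wedge_E_left: "wedge (E a S0) B mu U = (if finite U \<and> S0 \<subseteq> U \<and> a \<in> dv mu then wsign S0 (U - S0) * B (mu - a) (U - S0) else 0)"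
proof (cases "finite U")
  case True
  have "wedge (E a S0) B mu U = (\<Sum>x\<in>dv mu. \<Sum>S\<in>Pow U. wsign S (U - S) * E a S0 x S * B (mu - x) (U - S))"
    using True by (simp add: wedge_alt)
  also have "\<dots> = (if a \<in> dv mu \<and> S0 \<in> Pow U then wsign S0 (U - S0) * E a S0 a S0 * B (mu - a) (U - S0) else 0)"
    using True by (intro sum_single2) (auto simp: dv_finite E_def)
  finally show ?thesis using True by (auto simp: E_def)
qed (simp add: wedge_def)

lemma wedge_E_right: "wedge A (E b T0) mu U = (if finite U \<and> T0 \<subseteq> U \<and> b \<in> dv mu then wsign (U - T0) T0 * A (mu - b) (U - T0) else 0)"
proof (cases "finite U \<and> T0 \<subseteq> U \<and> b \<in> dv mu")
  case True
  then have fU: "finite U" and T0: "T0 \<subseteq> U" and b: "b \<in> dv mu" by auto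
  have mb: "mu - b \<in> dv mu" using b by (auto simp: dv_def add.commute)
  have "b + (mu - b) = mu" using b dv_iff by blast
  then have "(mu - b) + b = mu" by (simp add: add.commute)
  then have mmb: "mu - (mu - b) = b" by (rule dv_sub)
  have "wedge A (E b T0) mu U = (\<Sum>x\<in>dv mu. \<Sum>S\<in>Pow U. wsign S (U - S) * A x S * E b T0 (mu - x) (U - S))"
    using fU by (simp add: wedge_alt)
  also have "\<dots> = (if (mu - b) \<in> dv mu \<and> (U - T0) \<in> Pow U then wsign (U - T0) (U - (U - T0)) * A (mu - b) (U - T0) * E b T0 (mu - (mu - b)) (U - (U - T0)) else 0)"
  proof (intro sum_single2)
    fix x S assume x: "x \<in> dv mu" and S: "S \<in> Pow U" and ne: "x \<noteq> mu - b \<or> S \<noteq> U - T0"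
    have "E b T0 (mu - x) (U - S) = 0"
    proof (rule ccontr)
      assume "E b T0 (mu - x) (U - S) \<noteq> 0"
      then have 1: "mu - x = b" and 2: "U - S = T0" unfolding E_def by (auto split: if_splits)
      have "x + b = mu" using x 1 dv_iff by auto
      then have "x = mu - b" using dv_sub[of b x mu] by (simp add: add.commute)
      moreover have "S = U - T0" using 2 S by auto
      ultimately show False using ne by simp
    qed
    then show "wsign S (U - S) * A x S * E b T0 (mu - x) (U - S) = 0" by simp
  qed (auto simp: dv_finite fU)
  finally show ?thesis using True mb mmb T0 by (auto simp: E_def double_diff)
next
  case False
  show ?thesis
  proof (cases "finite U")
    case fU: True
    have "wedge A (E b T0) mu U = (\<Sum>x\<in>dv mu. \<Sum>S\<in>Pow U. wsign S (U - S) * A x S * E b T0 (mu - x) (U - S))"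
      using fU by (simp add: wedge_alt)
    also have "\<dots> = 0"
    proof (intro sum.neutral ballI)
      fix x S assume x: "x \<in> dv mu" and S: "S \<in> Pow U"
      have "E b T0 (mu - x) (U - S) = 0"
      proof (rule ccontr)
        assume "E b T0 (mu - x) (U - S) \<noteq> 0"
        then have 1: "mu - x = b" and 2: "U - S = T0" unfolding E_def by (auto split: if_splits)
        have "x + b = mu" using x 1 dv_iff by auto
        then have "b + x = mu" by (simp add: add.commute)
        then have "b \<in> dv mu" unfolding dv_def by blast
        then show False using False fU 2 by auto
      qed
      then show "wsign S (U - S) * A x S * E b T0 (mu - x) (U - S) = 0" by simp
    qed
    finally have "wedge A (E b T0) mu U = 0" .
    then show ?thesis by (subst if_not_P[OF False])
  qed (simp add: wedge_def)
qed

lemma dv_compl: "a \<in> dv mu \<Longrightarrow> mu - a \<in> dv mu \<and> mu - (mu - a) = a"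
proof -
  assume a: "a \<in> dv mu"
  have "a + (mu - a) = mu" using a dv_iff by blast
  then have e: "(mu - a) + a = mu" by (simp add: add.commute)
  then have "mu - (mu - a) = a" by (rule dv_sub)
  moreover have "mu - a \<in> dv mu" using e unfolding dv_def by blast
  ultimately show ?thesis by simp
qed

lemma lin_lf_wedge_left: "lin_lf (\<lambda>A. wedge A B)"
proof (rule lin_lfI)
  fix mu U
  show "\<exists>Q. finite Q \<and> (\<forall>F. wedge F B mu U = (\<Sum>q\<in>Q. F (fst q) (snd q) * wedge (E (fst q) (snd q)) B mu U))"
  proof (cases "finite U")
    case True
    show ?thesis
    proof (intro exI[of _ "dv mu \<times> Pow U"] conjI allI)
      show "finite (dv mu \<times> Pow U)" using True dv_finite by simp
      fix F
      have "(\<Sum>q\<in>dv mu \<times> Pow U. F (fst q) (snd q) * wedge (E (fst q) (snd q)) B mu U)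
          = (\<Sum>q\<in>dv mu \<times> Pow U. F (fst q) (snd q) * (wsign (snd q) (U - snd q) * B (mu - fst q) (U - snd q)))"
        using True by (intro sum.cong refl) (auto simp: wedge_E_left)
      also have "\<dots> = (\<Sum>a\<in>dv mu. \<Sum>S\<in>Pow U. F a S * (wsign S (U - S) * B (mu - a) (U - S)))"
        by (simp add: sum.cartesian_product split_def)
      also have "\<dots> = wedge F B mu U"
        using True by (simp add: wedge_alt mult_ac)
      finally show "wedge F B mu U = (\<Sum>q\<in>dv mu \<times> Pow U. F (fst q) (snd q) * wedge (E (fst q) (snd q)) B mu U)" ..
    qed
  next
    case False
    then show ?thesis by (intro exI[of _ "{}"]) (simp add: wedge_def)
  qed
qed

lemma lin_lf_wedge_right: "lin_lf (\<lambda>B. wedge A B)"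
proof (rule lin_lfI)
  fix mu U
  show "\<exists>Q. finite Q \<and> (\<forall>F. wedge A F mu U = (\<Sum>q\<in>Q. F (fst q) (snd q) * wedge A (E (fst q) (snd q)) mu U))"
  proof (cases "finite U")
    case True
    show ?thesis
    proof (intro exI[of _ "dv mu \<times> Pow U"] conjI allI)
      show "finite (dv mu \<times> Pow U)" using True dv_finite by simp
      fix F
      have "(\<Sum>q\<in>dv mu \<times> Pow U. F (fst q) (snd q) * wedge A (E (fst q) (snd q)) mu U)
          = (\<Sum>q\<in>dv mu \<times> Pow U. F (fst q) (snd q) * (wsign (U - snd q) (snd q) * A (mu - fst q) (U - snd q)))"
        using True by (intro sum.cong refl) (auto simp: wedge_E_right)
      also have "\<dots> = (\<Sum>q\<in>dv mu \<times> Pow U. wsign (snd q) (U - snd q) * A (fst q) (snd q) * F (mu - fst q) (U - snd q))"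
        by (rule sum.reindex_bij_witness[where i="\<lambda>q. (mu - fst q, U - snd q)" and j="\<lambda>q. (mu - fst q, U - snd q)"])
          (auto simp: double_diff mult_ac prod_eq_iff dest: dv_compl)
      also have "\<dots> = wedge A F mu U"
        using True by (simp add: wedge_alt sum.cartesian_product split_def mult_ac)
      finally show "wedge A F mu U = (\<Sum>q\<in>dv mu \<times> Pow U. F (fst q) (snd q) * wedge A (E (fst q) (snd q)) mu U)" ..
    qed
  next
    case False
    then show ?thesis by (intro exI[of _ "{}"]) (simp add: wedge_def)
  qed
qed

lemma wedge_sc_left: "wedge (sc k A) B = sc k (wedge A B)"
proof -
  have "lin_lf (\<lambda>X. wedge X B)" by (rule lin_lf_wedge_left)
  from lin_lf_sc[OF this] show ?thesis by simp
qed

lemma wedge_sc_right: "wedge A (sc k B) = sc k (wedge A B)"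
proof -
  have "lin_lf (\<lambda>X. wedge A X)" by (rule lin_lf_wedge_right)
  from lin_lf_sc[OF this] show ?thesis by simp
qed

lemma wedge_zero_left[simp]: "wedge 0 B = 0"
proof -
  have "lin_lf (\<lambda>X. wedge X B)" by (rule lin_lf_wedge_left)
  from lin_lf_zero[OF this] show ?thesis by simp
qed

lemma wedge_zero_right[simp]: "wedge A 0 = 0"
proof -
  have "lin_lf (\<lambda>X. wedge A X)" by (rule lin_lf_wedge_right)
  from lin_lf_zero[OF this] show ?thesis by simp
qed

lemma wedge_diff_left: "wedge (A - A') B = wedge A B - wedge A' B"
proof -
  have "lin_lf (\<lambda>X. wedge X B)" by (rule lin_lf_wedge_left)
  from lin_lf_diff[OF this] show ?thesis by simp
qed

lemma wedge_diff_right: "wedge A (B - B') = wedge A B - wedge A B'"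
proof -
  have "lin_lf (\<lambda>X. wedge A X)" by (rule lin_lf_wedge_right)
  from lin_lf_diff[OF this] show ?thesis by simp
qed

lemma wedge_add_left: "wedge (A + A') B = wedge A B + wedge A' B"
proof -
  have "lin_lf (\<lambda>X. wedge X B)" by (rule lin_lf_wedge_left)
  from lin_lf_add[OF this] show ?thesis by simp
qed

lemma wedge_add_right: "wedge A (B + B') = wedge A B + wedge A B'"
proof -
  have "lin_lf (\<lambda>X. wedge A X)" by (rule lin_lf_wedge_right)
  from lin_lf_add[OF this] show ?thesis by simp
qed

lemma wedge_uminus_left: "wedge (- A) B = - wedge A B"
proof -
  have "lin_lf (\<lambda>X. wedge X B)" by (rule lin_lf_wedge_left)
  from lin_lf_uminus[OF this] show ?thesis by simp
qed

lemma wedge_uminus_right: "wedge A (- B) = - wedge A B"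
proof -
  have "lin_lf (\<lambda>X. wedge A X)" by (rule lin_lf_wedge_right)
  from lin_lf_uminus[OF this] show ?thesis by simp
qed

lemma sc_zero[simp]: "sc k 0 = 0" by (simp add: sc_def zero_fun_def)
lemma sc_sc[simp]: "sc k (sc l X) = sc (k * l) X" by (simp add: sc_def mult.assoc)
lemma sc_one[simp]: "sc 1 X = X" by (simp add: sc_def)

lemma wedge_EE: "wedge (E a S) (E b T) = (if finite S \<and> finite T \<and> S \<inter> T = {} then sc (wsign S T) (E (a + b) (S \<union> T)) else 0)"
proof (intro ext)
  fix mu U
  have l: "wedge (E a S) (E b T) mu U = (if finite U \<and> S \<subseteq> U \<and> a \<in> dv mu \<and> mu - a = b \<and> U - S = T then wsign S (U - S) else 0)"
    unfolding wedge_E_left by (simp add: E_def)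
  have iff: "(finite U \<and> S \<subseteq> U \<and> a \<in> dv mu \<and> mu - a = b \<and> U - S = T) \<longleftrightarrow>
      (finite S \<and> finite T \<and> S \<inter> T = {} \<and> mu = a + b \<and> U = S \<union> T)"
  proof
    assume c: "finite U \<and> S \<subseteq> U \<and> a \<in> dv mu \<and> mu - a = b \<and> U - S = T"
    then have "a + (mu - a) = mu" using dv_iff by blast
    then show "finite S \<and> finite T \<and> S \<inter> T = {} \<and> mu = a + b \<and> U = S \<union> T"
      using c by (auto intro: finite_subset)
  next
    assume c: "finite S \<and> finite T \<and> S \<inter> T = {} \<and> mu = a + b \<and> U = S \<union> T"
    then have "a \<in> dv mu" unfolding dv_def by blast
    moreover have "mu - a = b" using c dv_sub by simp
    ultimately show "finite U \<and> S \<subseteq> U \<and> a \<in> dv mu \<and> mu - a = b \<and> U - S = T" using c by auto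
  qed
  show "wedge (E a S) (E b T) mu U = (if finite S \<and> finite T \<and> S \<inter> T = {} then sc (wsign S T) (E (a + b) (S \<union> T)) else 0) mu U"
  proof (cases "finite S \<and> finite T \<and> S \<inter> T = {} \<and> mu = a + b \<and> U = S \<union> T")
    case True
    then have "U - S = T" by auto
    then show ?thesis unfolding l using True iff by (simp add: sc_def E_def)
  next
    case False
    then show ?thesis unfolding l using False iff by (auto simp: sc_def E_def)
  qed
qed

lemma wsign_pairs_finite: "finite S \<Longrightarrow> finite T \<Longrightarrow> finite {(a, b). a \<in> S \<and> b \<in> T \<and> a < (b::nat)}"
  by (rule finite_subset[of _ "S \<times> T"]) auto

lemma wsign_Un_left:
  assumes "finite S" "finite T" "finite R" "S \<inter> T = {}"
  shows "wsign (S \<union> T) R = wsign S R * wsign T R"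
proof -
  have e: "{(a, b). a \<in> S \<union> T \<and> b \<in> R \<and> a < b} = {(a, b). a \<in> S \<and> b \<in> R \<and> a < b} \<union> {(a, b). a \<in> T \<and> b \<in> R \<and> a < b}"
    by auto
  have "card {(a, b). a \<in> S \<union> T \<and> b \<in> R \<and> a < b} = card {(a, b). a \<in> S \<and> b \<in> R \<and> a < b} + card {(a, b). a \<in> T \<and> b \<in> R \<and> a < b}"
    unfolding e using assms by (intro card_Un_disjoint wsign_pairs_finite) auto
  then show ?thesis unfolding wsign_def by (simp add: power_add)
qed

lemma wsign_Un_right:
  assumes "finite S" "finite T" "finite R" "T \<inter> R = {}"
  shows "wsign S (T \<union> R) = wsign S T * wsign S R"
proof -
  have e: "{(a, b). a \<in> S \<and> b \<in> T \<union> R \<and> a < b} = {(a, b). a \<in> S \<and> b \<in> T \<and> a < b} \<union> {(a, b). a \<in> S \<and> b \<in> R \<and> a < b}"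
    by auto
  have "card {(a, b). a \<in> S \<and> b \<in> T \<union> R \<and> a < b} = card {(a, b). a \<in> S \<and> b \<in> T \<and> a < b} + card {(a, b). a \<in> S \<and> b \<in> R \<and> a < b}"
    unfolding e using assms by (intro card_Un_disjoint wsign_pairs_finite) auto
  then show ?thesis unfolding wsign_def by (simp add: power_add)
qed

lemma assoc_basis: "wedge (wedge (E a S) (E b T)) (E c R) = wedge (E a S) (wedge (E b T) (E c R))"
proof (cases "finite S \<and> finite T \<and> finite R \<and> S \<inter> T = {} \<and> S \<inter> R = {} \<and> T \<inter> R = {}")
  case True
  then have "wsign S T * wsign (S \<union> T) R = wsign T R * wsign S (T \<union> R)"
    by (simp add: wsign_Un_left wsign_Un_right)
  then show ?thesis using True
    by (simp add: wedge_EE wedge_sc_left wedge_sc_right Int_Un_distrib Int_Un_distrib2 add.assoc Un_assoc mult.commute)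
next
  case False
  then show ?thesis
    by (auto simp: wedge_EE wedge_sc_left wedge_sc_right Int_Un_distrib Int_Un_distrib2)
qed

lemma wedge_assoc: "wedge (wedge A B) C = wedge A (wedge B C)"
proof -
  have b2: "wedge (wedge (E a S) (E b T)) C = wedge (E a S) (wedge (E b T) C)" for a S b T
    by (rule lin_lf_eq[where L="\<lambda>C. wedge (wedge (E a S) (E b T)) C" and M="\<lambda>C. wedge (E a S) (wedge (E b T) C)",
          OF lin_lf_wedge_right lin_lf_comp[OF lin_lf_wedge_right lin_lf_wedge_right] assoc_basis])
  have b1: "wedge (wedge (E a S) B) C = wedge (E a S) (wedge B C)" for a S
    by (rule lin_lf_eq[where L="\<lambda>B. wedge (wedge (E a S) B) C" and M="\<lambda>B. wedge (E a S) (wedge B C)",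
          OF lin_lf_comp[OF lin_lf_wedge_left lin_lf_wedge_right] lin_lf_comp[OF lin_lf_wedge_right lin_lf_wedge_left] b2])
  show ?thesis
    by (rule lin_lf_eq[where L="\<lambda>A. wedge (wedge A B) C" and M="\<lambda>A. wedge A (wedge B C)",
          OF lin_lf_comp[OF lin_lf_wedge_left lin_lf_wedge_left] lin_lf_wedge_left b1])
qed

definition P0 :: "ser \<Rightarrow> ser" where "P0 F = (\<lambda>mu U. if U = {} then F mu U else 0)"
definition P1 :: "ser \<Rightarrow> ser" where "P1 F = (\<lambda>mu U. if card U = 1 then F mu U else 0)"
definition deg0 :: "ser \<Rightarrow> bool" where "deg0 F \<longleftrightarrow> (\<forall>mu U. U \<noteq> {} \<longrightarrow> F mu U = 0)"
definition deg1 :: "ser \<Rightarrow> bool" where "deg1 F \<longleftrightarrow> (\<forall>mu U. card U \<noteq> 1 \<longrightarrow> F mu U = 0)"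
definition fin :: "ser \<Rightarrow> bool" where "fin F \<longleftrightarrow> (\<forall>mu U. infinite U \<longrightarrow> F mu U = 0)"

lemma lin_lf_P0: "lin_lf P0"
proof -
  have e: "P0 = (\<lambda>F mu U. (if U = {} then 1 else 0) * F mu U)" by (auto simp: P0_def fun_eq_iff)
  show ?thesis by (subst e) (rule lin_lf_pw)
qed

lemma lin_lf_P1: "lin_lf P1"
proof -
  have e: "P1 = (\<lambda>F mu U. (if card U = 1 then 1 else 0) * F mu U)" by (auto simp: P1_def fun_eq_iff)
  show ?thesis by (subst e) (rule lin_lf_pw)
qed

lemma lin_lf_uminus_op: "lin_lf uminus"
proof -
  have e: "(uminus :: ser \<Rightarrow> ser) = (\<lambda>F mu U. (-1) * F mu U)" by (auto simp: fun_eq_iff)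
  show ?thesis by (subst e) (rule lin_lf_pw)
qed

lemma P0_E: "P0 (E a S) = (if S = {} then E a S else 0)"
  by (auto simp: P0_def E_def fun_eq_iff)
lemma P1_E: "P1 (E a S) = (if card S = 1 then E a S else 0)"
  by (auto simp: P1_def E_def fun_eq_iff)

lemma deg0_P0: "deg0 c \<Longrightarrow> P0 c = c" by (auto simp: deg0_def P0_def fun_eq_iff)
lemma deg1_P1: "deg1 c \<Longrightarrow> P1 c = c" by (auto simp: deg1_def P1_def fun_eq_iff)

lemma wsign_empty1[simp]: "wsign {} T = 1" by (simp add: wsign_def)
lemma wsign_empty2[simp]: "wsign T {} = 1" by (simp add: wsign_def)

lemma central_P0: "wedge (P0 c) X = wedge X (P0 c)"
proof -
  have b: "wedge (P0 (E a S)) (E b T) = wedge (E b T) (P0 (E a S))" for a S b T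
    by (simp add: P0_E wedge_EE add.commute)
  have b1: "wedge (P0 (E a S)) X = wedge X (P0 (E a S))" for a S
    by (rule lin_lf_eq[where L="\<lambda>X. wedge (P0 (E a S)) X" and M="\<lambda>X. wedge X (P0 (E a S))",
          OF lin_lf_wedge_right lin_lf_wedge_left b])
  show ?thesis
    by (rule lin_lf_eq[where L="\<lambda>c. wedge (P0 c) X" and M="\<lambda>c. wedge X (P0 c)",
          OF lin_lf_comp[OF lin_lf_wedge_left lin_lf_P0] lin_lf_comp[OF lin_lf_wedge_right lin_lf_P0] b1])
qed

lemma central: "deg0 c \<Longrightarrow> wedge c X = wedge X c"
  using central_P0[of c X] deg0_P0 by simp

lemma uminus_sc: "- sc k X = sc (- k) X" by (simp add: sc_def fun_eq_iff)

lemma wsign_single: "wsign {s} {t} = (if s < t then -1 else 1)"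
proof -
  have "{(a, b). a \<in> {s} \<and> b \<in> {t} \<and> a < b} = (if s < t then {(s, t)} else {})" by auto
  then show ?thesis by (simp add: wsign_def)
qed

lemma anticomm_P1: "wedge (P1 x) (P1 y) = - wedge (P1 y) (P1 x)"
proof -
  have b: "wedge (P1 (E a S)) (P1 (E b T)) = - wedge (P1 (E b T)) (P1 (E a S))" for a S b T
  proof (cases "card S = 1 \<and> card T = 1")
    case True
    then obtain s t where st: "S = {s}" "T = {t}" by (auto simp: card_Suc_eq)
    show ?thesis
    proof (cases "s = t")
      case True then show ?thesis using st by (simp add: P1_E wedge_EE)
    next
      case False
      then have "s < t \<or> t < s" by auto
      then show ?thesis using st False by (auto simp: P1_E wedge_EE uminus_sc wsign_single add.commute insert_commute)
    qed
  next
    case False then show ?thesis by (auto simp: P1_E)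
  qed
  have b1: "wedge (P1 (E a S)) (P1 y) = - wedge (P1 y) (P1 (E a S))" for a S
    by (rule lin_lf_eq[where L="\<lambda>y. wedge (P1 (E a S)) (P1 y)" and M="\<lambda>y. - wedge (P1 y) (P1 (E a S))",
          OF lin_lf_comp[OF lin_lf_wedge_right lin_lf_P1]
             lin_lf_comp[OF lin_lf_uminus_op lin_lf_comp[OF lin_lf_wedge_left lin_lf_P1]] b])
  show ?thesis
    by (rule lin_lf_eq[where L="\<lambda>x. wedge (P1 x) (P1 y)" and M="\<lambda>x. - wedge (P1 y) (P1 x)",
          OF lin_lf_comp[OF lin_lf_wedge_left lin_lf_P1]
             lin_lf_comp[OF lin_lf_uminus_op lin_lf_comp[OF lin_lf_wedge_right lin_lf_P1]] b1])
qed

lemma anticomm: "deg1 x \<Longrightarrow> deg1 y \<Longrightarrow> wedge x y = - wedge y x"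
  using anticomm_P1[of x y] deg1_P1 by simp

lemma wedge_self: "deg1 x \<Longrightarrow> wedge x x = 0"
proof -
  assume "deg1 x"
  then have e: "wedge x x = - wedge x x" using anticomm by blast
  show ?thesis
  proof (intro ext)
    fix mu U
    have "wedge x x mu U = - wedge x x mu U" using fun_cong[OF fun_cong[OF e, of mu], of U] by simp
    then show "wedge x x mu U = 0 mu U" by simp
  qed
qed

lemma fin_wedge: "fin (wedge A B)" by (simp add: fin_def wedge_def)
lemma fin_wunit: "fin wunit" by (simp add: fin_def wunit_def)
lemma fin_wl: "fin (wedge_list xs)" by (cases xs) (simp_all add: fin_wedge fin_wunit)

lemma wunit_E: "wunit = E 0 {}" by (simp add: wunit_def E_def fun_eq_iff)
lemma mono_E: "mono a = E a {}" by (simp add: mono_def E_def fun_eq_iff)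

lemma zero_dv: "0 \<in> dv mu" by (simp add: dv_def)

lemma wedge_unit_left: "fin F \<Longrightarrow> wedge wunit F = F"
  by (auto simp: fun_eq_iff wunit_E wedge_E_left zero_dv fin_def)
lemma wedge_unit_right: "fin F \<Longrightarrow> wedge F wunit = F"
  by (auto simp: fun_eq_iff wunit_E wedge_E_right zero_dv fin_def)

lemma wl_append: "wedge_list (xs @ ys) = wedge (wedge_list xs) (wedge_list ys)"
  by (induction xs) (simp_all add: wedge_unit_left fin_wl wedge_assoc)

lemma wl_single: "fin x \<Longrightarrow> wedge_list [x] = x"
  by (simp add: wedge_unit_right)

definition desc :: "nat set \<Rightarrow> nat list" where "desc S = rev (sorted_list_of_set S)"

lemma desc_insert_max:
  assumes "finite A" "\<forall>a\<in>A. a < b"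
  shows "desc (insert b A) = b # desc A"
proof -
  have "b \<notin> A" using assms by auto
  then have "sorted_list_of_set (insert b A) = insort b (sorted_list_of_set A)"
    using assms(1) by (simp add: sorted_list_of_set_insert_remove)
  also have "\<dots> = sorted_list_of_set A @ [b]"
    using assms by (intro sorted_insort_is_snoc) auto
  finally show ?thesis by (simp add: desc_def)
qed

lemma desc_empty[simp]: "desc {} = []" by (simp add: desc_def)

lemma set_desc: "finite S \<Longrightarrow> set (desc S) = S" by (simp add: desc_def)

lemma lam_zero[simp]: "(\<lambda>a b. 0::rat) = (0::ser)" by (simp add: fun_eq_iff)

lemma wl_mem_zero:
  assumes "\<forall>y\<in>set ys. deg1 y" "deg1 x" "x \<in> set ys"
  shows "wedge x (wedge_list ys) = 0"
  using assms
proof (induction ys)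
  case Nil then show ?case by simp
next
  case (Cons y ys)
  show ?case
  proof (cases "x = y")
    case True
    have "wedge x (wedge y (wedge_list ys)) = wedge (wedge x y) (wedge_list ys)" by (simp add: wedge_assoc)
    also have "wedge x y = 0" using True Cons.prems wedge_self by simp
    finally show ?thesis by simp
  next
    case False
    then have "x \<in> set ys" using Cons by simp
    then have "wedge x (wedge_list ys) = 0" using Cons by simp
    have "wedge x (wedge y (wedge_list ys)) = wedge (wedge x y) (wedge_list ys)" by (simp add: wedge_assoc)
    also have "\<dots> = wedge (- wedge y x) (wedge_list ys)" using Cons.prems anticomm[of x y] by simp
    also have "\<dots> = - wedge y (wedge x (wedge_list ys))" by (simp add: wedge_uminus_left wedge_assoc)
    also have "\<dots> = - wedge y 0" using \<open>wedge x (wedge_list ys) = 0\<close> by simp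
    also have "\<dots> = 0" by (simp add: lam_zero)
    finally show ?thesis by simp
  qed
qed

lemma wl_not_distinct:
  assumes "\<forall>y\<in>set ys. deg1 y" "\<not> distinct ys"
  shows "wedge_list ys = 0"
  using assms
proof (induction ys)
  case Nil then show ?case by simp
next
  case (Cons y ys)
  show ?case
  proof (cases "y \<in> set ys")
    case True then show ?thesis using Cons wl_mem_zero by simp
  next
    case False
    have z: "wedge_list ys = 0" by (rule Cons.IH) (use Cons False in auto)
    show ?thesis by (simp add: z)
  qed
qed

lemma wl_insert:
  assumes f: "\<And>k. deg1 (f k)" and T: "finite T" "x \<notin> T"
  shows "wedge (f x) (wedge_list (map f (desc T))) = sc ((-1) ^ card {t\<in>T. x < t}) (wedge_list (map f (desc (insert x T))))"
  using T
proof (induction T rule: finite_linorder_max_induct)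
  case empty
  then show ?case by (simp add: desc_insert_max)
next
  case (insert t T')
  have tT': "t \<notin> T'" using insert by auto
  have dT: "desc (insert t T') = t # desc T'" using insert by (simp add: desc_insert_max)
  show ?case
  proof (cases "t < x")
    case True
    then have "\<forall>a\<in>insert t T'. a < x" using insert by auto
    then have "desc (insert x (insert t T')) = x # desc (insert t T')" using insert by (simp add: desc_insert_max)
    moreover have "card {t'\<in>insert t T'. x < t'} = 0" using True insert by auto
    ultimately show ?thesis by simp
  next
    case False
    then have xt: "x < t" using insert by auto
    have xT': "x \<notin> T'" using insert by auto
    have IH: "wedge (f x) (wedge_list (map f (desc T'))) = sc ((-1) ^ card {t\<in>T'. x < t}) (wedge_list (map f (desc (insert x T'))))"
      using insert xT' by simp
    have d2: "desc (insert x (insert t T')) = t # desc (insert x T')"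
    proof -
      have "insert x (insert t T') = insert t (insert x T')" by auto
      moreover have "\<forall>a\<in>insert x T'. a < t" using insert xt by auto
      ultimately show ?thesis using insert by (simp add: desc_insert_max)
    qed
    have cnt: "card {t'\<in>insert t T'. x < t'} = Suc (card {t\<in>T'. x < t})"
    proof -
      have "{t'\<in>insert t T'. x < t'} = insert t {t\<in>T'. x < t}" using xt by auto
      then show ?thesis using tT' insert by simp
    qed
    have "wedge (f x) (wedge_list (map f (desc (insert t T')))) = wedge (wedge (f x) (f t)) (wedge_list (map f (desc T')))"
      by (simp add: dT wedge_assoc)
    also have "\<dots> = - wedge (f t) (wedge (f x) (wedge_list (map f (desc T'))))"
      using anticomm[OF f f, of x t] by (simp only: wedge_uminus_left wedge_assoc)
    also have "\<dots> = sc (- ((-1) ^ card {t\<in>T'. x < t})) (wedge_list (map f (desc (insert x (insert t T')))))"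
      by (simp add: IH d2 wedge_sc_right uminus_sc)
    finally have r: "wedge (f x) (wedge_list (map f (desc (insert t T')))) = sc (- ((-1) ^ card {t\<in>T'. x < t})) (wedge_list (map f (desc (insert x (insert t T')))))" .
    have e: "(- ((-1) ^ card {t\<in>T'. x < t})) = ((-1::rat) ^ card {t'\<in>insert t T'. x < t'})"
      by (simp only: cnt power_Suc)
    show ?thesis using r by (simp only: e)
  qed
qed

lemma card_pairs_single: "finite T \<Longrightarrow> card {(a, b). a \<in> {s} \<and> b \<in> T \<and> a < (b::nat)} = card {t\<in>T. s < t}"
proof -
  have "{(a, b). a \<in> {s} \<and> b \<in> T \<and> a < (b::nat)} = (\<lambda>b. (s, b)) ` {t\<in>T. s < t}" by auto
  moreover have "inj_on (\<lambda>b. (s, b)) {t\<in>T. s < t}" by (auto intro: inj_onI)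
  ultimately show ?thesis by (simp add: card_image)
qed

lemma wl_merge:
  assumes f: "\<And>k. deg1 (f k)" and S: "finite S" and T: "finite T" "S \<inter> T = {}"
  shows "wedge_list (map f (desc S @ desc T)) = sc (wsign S T) (wedge_list (map f (desc (S \<union> T))))"
  using S T
proof (induction S rule: finite_linorder_max_induct)
  case empty
  then show ?case by simp
next
  case (insert s S')
  have sS': "s \<notin> S'" using insert by auto
  have dS: "desc (insert s S') = s # desc S'" using insert by (simp add: desc_insert_max)
  have IH: "wedge_list (map f (desc S' @ desc T)) = sc (wsign S' T) (wedge_list (map f (desc (S' \<union> T))))"
    using insert by simp
  have sU: "s \<notin> S' \<union> T" using insert sS' by auto
  have c: "{t\<in>S' \<union> T. s < t} = {t\<in>T. s < t}" using insert by auto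
  have ws: "wsign (insert s S') T = wsign {s} T * wsign S' T"
    using wsign_Un_left[of "{s}" S' T] insert sS' by simp
  have ws1: "wsign {s} T = (-1) ^ card {t\<in>T. s < t}"
    unfolding wsign_def using card_pairs_single[of T s] insert by simp
  have "wedge_list (map f (desc (insert s S') @ desc T)) = wedge (f s) (wedge_list (map f (desc S' @ desc T)))"
    by (simp add: dS)
  also have "\<dots> = sc (wsign S' T) (wedge (f s) (wedge_list (map f (desc (S' \<union> T)))))"
    using IH by (simp add: wedge_sc_right)
  also have "\<dots> = sc (wsign S' T * (-1) ^ card {t\<in>T. s < t}) (wedge_list (map f (desc (insert s (S' \<union> T)))))"
  proof -
    have "wedge (f s) (wedge_list (map f (desc (S' \<union> T)))) = sc ((-1) ^ card {t\<in>S' \<union> T. s < t}) (wedge_list (map f (desc (insert s (S' \<union> T)))))"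
      by (rule wl_insert[where f=f, OF f]) (use insert.hyps T sU in auto)
    then show ?thesis unfolding c by simp
  qed
  finally have r: "wedge_list (map f (desc (insert s S') @ desc T)) = sc (wsign S' T * (-1) ^ card {t\<in>T. s < t}) (wedge_list (map f (desc (insert s (S' \<union> T)))))" .
  have e1: "insert s S' \<union> T = insert s (S' \<union> T)" by auto
  have e2: "wsign (insert s S') T = wsign S' T * (-1) ^ card {t\<in>T. s < t}" unfolding ws ws1 by (rule mult.commute)
  show ?case unfolding e1 e2 by (rule r)
qed

lemma sigma_E: "sigma n v (E a S) = (if finite S then wedge (mono a) (wedge_list (map (sigma1 n v) (desc S))) else 0)"
proof (intro ext)
  fix mu U
  let ?g = "\<lambda>(\<alpha>, S'). if finite S' then E a S \<alpha> S' * wedge (mono \<alpha>) (wedge_list (map (sigma1 n v) (rev (sorted_list_of_set S')))) mu U else 0"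
  have "sigma n v (E a S) mu U = Sum_any ?g" by (simp only: sigma_def)
  also have "Sum_any ?g = sum ?g {(a, S)}" by (rule Sum_any.expand_superset) (auto simp: E_def split: if_splits)
  also have "\<dots> = (if finite S then wedge (mono a) (wedge_list (map (sigma1 n v) (desc S))) else 0) mu U"
    by (simp add: E_def desc_def)
  finally show "sigma n v (E a S) mu U = (if finite S then wedge (mono a) (wedge_list (map (sigma1 n v) (desc S))) else 0) mu U" .
qed

lemma sigma1_nz: "sigma1 n v y a S \<noteq> 0 \<Longrightarrow> \<exists>m. S = {m} \<and> y \<le> m"
  by (auto simp: sigma1_def split: if_splits)

lemma wl_sigma1_support:
  "wedge_list (map (sigma1 n v) xs) b U \<noteq> 0 \<Longrightarrow> x \<in> set xs \<Longrightarrow> \<exists>m\<in>U. x \<le> m"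
proof (induction xs arbitrary: b U)
  case Nil then show ?case by simp
next
  case (Cons y ys)
  have nz: "wedge (sigma1 n v y) (wedge_list (map (sigma1 n v) ys)) b U \<noteq> 0" using Cons.prems by simp
  have fU: "finite U"
  proof (rule ccontr)
    assume "infinite U"
    then have "wedge (sigma1 n v y) (wedge_list (map (sigma1 n v) ys)) b U = 0" by (simp add: wedge_def)
    with nz show False by simp
  qed
  then have "(\<Sum>a\<in>dv b. \<Sum>S\<in>Pow U. wsign S (U - S) * sigma1 n v y a S * wedge_list (map (sigma1 n v) ys) (b - a) (U - S)) \<noteq> 0"
    using nz by (simp add: wedge_alt)
  then obtain a where "(\<Sum>S\<in>Pow U. wsign S (U - S) * sigma1 n v y a S * wedge_list (map (sigma1 n v) ys) (b - a) (U - S)) \<noteq> 0"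
    by (rule sum.not_neutral_contains_not_neutral)
  then obtain S where S: "S \<in> Pow U" and t: "wsign S (U - S) * sigma1 n v y a S * wedge_list (map (sigma1 n v) ys) (b - a) (U - S) \<noteq> 0"
    by (rule sum.not_neutral_contains_not_neutral)
  from t have s1: "sigma1 n v y a S \<noteq> 0" and w: "wedge_list (map (sigma1 n v) ys) (b - a) (U - S) \<noteq> 0" by auto
  obtain m where m: "S = {m}" "y \<le> m" using sigma1_nz[OF s1] by blast
  show ?case
  proof (cases "x = y")
    case True then show ?thesis using m S by auto
  next
    case False
    then have "x \<in> set ys" using Cons.prems by simp
    then obtain m' where "m' \<in> U - S" "x \<le> m'" using Cons.IH[OF w] by blast
    then show ?thesis by auto
  qed
qed

lemma wedge_mono_nz: "wedge (mono a) G mu U \<noteq> 0 \<Longrightarrow> finite U \<and> a \<in> dv mu \<and> G (mu - a) U \<noteq> 0"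
  by (simp add: mono_E wedge_E_left split: if_splits)

lemma lin_lf_sigma: "lin_lf (sigma n v)"
proof (rule lin_lfI)
  fix mu :: "nat \<Rightarrow>\<^sub>0 nat" and U :: "nat set"
  define Q where "Q = (if finite U then dv mu \<times> Pow (\<Union>m\<in>U. {..m}) else {})"
  have fQ: "finite Q" unfolding Q_def by (auto intro!: finite_cartesian_product dv_finite finite_UN_I finite_atMost)
  show "\<exists>Q. finite Q \<and> (\<forall>F. sigma n v F mu U = (\<Sum>q\<in>Q. F (fst q) (snd q) * sigma n v (E (fst q) (snd q)) mu U))"
  proof (intro exI[of _ Q] conjI allI fQ)
    fix F
    let ?g = "\<lambda>(\<alpha>, S). if finite S then F \<alpha> S * wedge (mono \<alpha>) (wedge_list (map (sigma1 n v) (rev (sorted_list_of_set S)))) mu U else 0"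
    have sup: "{q. ?g q \<noteq> 0} \<subseteq> Q"
    proof
      fix q assume qin: "q \<in> {q. ?g q \<noteq> 0}"
      obtain \<alpha> S where q: "q = (\<alpha>, S)" by (cases q)
      have nz0: "(if finite S then F \<alpha> S * wedge (mono \<alpha>) (wedge_list (map (sigma1 n v) (rev (sorted_list_of_set S)))) mu U else 0) \<noteq> 0"
        using qin q by simp
      then have fS: "finite S"
        and nz: "wedge (mono \<alpha>) (wedge_list (map (sigma1 n v) (rev (sorted_list_of_set S)))) mu U \<noteq> 0"
        by (auto split: if_splits)
      from wedge_mono_nz[OF nz] have fU: "finite U" and a: "\<alpha> \<in> dv mu"
        and w: "wedge_list (map (sigma1 n v) (rev (sorted_list_of_set S))) (mu - \<alpha>) U \<noteq> 0" by auto
      have "S \<subseteq> (\<Union>m\<in>U. {..m})"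
      proof
        fix x assume "x \<in> S"
        then have "x \<in> set (rev (sorted_list_of_set S))" using fS by simp
        then obtain m where "m \<in> U" "x \<le> m" using wl_sigma1_support[OF w] by blast
        then show "x \<in> (\<Union>m\<in>U. {..m})" by auto
      qed
      then show "q \<in> Q" using q fU a by (simp add: Q_def)
    qed
    have "sigma n v F mu U = Sum_any ?g" by (simp add: sigma_def)
    also have "\<dots> = sum ?g Q" by (rule Sum_any.expand_superset[OF fQ sup])
    also have "\<dots> = (\<Sum>q\<in>Q. F (fst q) (snd q) * sigma n v (E (fst q) (snd q)) mu U)"
      by (intro sum.cong refl) (auto simp: sigma_E desc_def split: prod.splits)
    finally show "sigma n v F mu U = (\<Sum>q\<in>Q. F (fst q) (snd q) * sigma n v (E (fst q) (snd q)) mu U)" .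
  qed
qed

lemma deg1_sigma1: "deg1 (sigma1 n v k)"
  by (auto simp: deg1_def sigma1_def)

lemma deg0_mono: "deg0 (mono a)" by (simp add: deg0_def mono_def)

lemma mono_mono: "wedge (mono a) (mono b) = mono (a + b)"
  by (simp add: mono_E wedge_EE)

lemma monos_wedge: "wedge (wedge (mono a) X) (wedge (mono b) Y) = wedge (mono (a + b)) (wedge X Y)"
proof -
  have "wedge (wedge (mono a) X) (wedge (mono b) Y) = wedge (mono a) (wedge (wedge X (mono b)) Y)"
    by (simp add: wedge_assoc)
  also have "wedge X (mono b) = wedge (mono b) X" using central[OF deg0_mono] by simp
  also have "wedge (mono a) (wedge (wedge (mono b) X) Y) = wedge (wedge (mono a) (mono b)) (wedge X Y)"
    by (simp add: wedge_assoc)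
  finally show ?thesis by (simp add: mono_mono)
qed

lemma sigma_hom_basis: "sigma n v (wedge (E a S) (E b T)) = wedge (sigma n v (E a S)) (sigma n v (E b T))"
proof (cases "finite S \<and> finite T")
  case True
  show ?thesis
  proof (cases "S \<inter> T = {}")
    case True2: True
    have "wedge (sigma n v (E a S)) (sigma n v (E b T))
        = wedge (mono (a + b)) (wedge_list (map (sigma1 n v) (desc S @ desc T)))"
      using True by (simp add: sigma_E monos_wedge wl_append)
    also have "\<dots> = sc (wsign S T) (wedge (mono (a + b)) (wedge_list (map (sigma1 n v) (desc (S \<union> T)))))"
      using wl_merge[of "sigma1 n v" S T] deg1_sigma1 True True2 by (simp add: wedge_sc_right)
    finally show ?thesis using True True2 by (simp add: wedge_EE lin_lf_sc[OF lin_lf_sigma] sigma_E)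
  next
    case False
    then obtain s where "s \<in> S" "s \<in> T" by auto
    then have nd: "\<not> distinct (map (sigma1 n v) (desc S @ desc T))"
      using True by (auto simp: set_desc distinct_map)
    have "wedge (sigma n v (E a S)) (sigma n v (E b T))
        = wedge (mono (a + b)) (wedge_list (map (sigma1 n v) (desc S @ desc T)))"
      using True by (simp add: sigma_E monos_wedge wl_append)
    also have "wedge_list (map (sigma1 n v) (desc S @ desc T)) = 0"
      using nd deg1_sigma1 by (intro wl_not_distinct) auto
    finally show ?thesis using False by (simp add: wedge_EE lin_lf_zero[OF lin_lf_sigma])
  qed
next
  case False
  then show ?thesis by (auto simp: wedge_EE lin_lf_zero[OF lin_lf_sigma] sigma_E)
qed

lemma sigma_hom: "sigma n v (wedge A B) = wedge (sigma n v A) (sigma n v B)"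
proof -
  have b1: "sigma n v (wedge (E a S) B) = wedge (sigma n v (E a S)) (sigma n v B)" for a S
    by (rule lin_lf_eq[where L="\<lambda>B. sigma n v (wedge (E a S) B)" and M="\<lambda>B. wedge (sigma n v (E a S)) (sigma n v B)",
          OF lin_lf_comp[OF lin_lf_sigma lin_lf_wedge_right] lin_lf_comp[OF lin_lf_wedge_right lin_lf_sigma] sigma_hom_basis])
  show ?thesis
    by (rule lin_lf_eq[where L="\<lambda>A. sigma n v (wedge A B)" and M="\<lambda>A. wedge (sigma n v A) (sigma n v B)",
          OF lin_lf_comp[OF lin_lf_sigma lin_lf_wedge_left] lin_lf_comp[OF lin_lf_wedge_left lin_lf_sigma] b1])
qed

lemma sigma_zero[simp]: "sigma n v 0 = 0" by (rule lin_lf_zero[OF lin_lf_sigma])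
lemma sigma_diff: "sigma n v (A - B) = sigma n v A - sigma n v B" by (rule lin_lf_diff[OF lin_lf_sigma])

lemma fin_mono: "fin (mono a)" by (simp add: fin_def mono_def)
lemma fin_deg1: "deg1 x \<Longrightarrow> fin x"
  by (auto simp: fin_def deg1_def)
lemma fin_sigma1: "fin (sigma1 n v k)" by (rule fin_deg1[OF deg1_sigma1])

lemma sigma_mono: "sigma n v (mono a) = mono a"
  using sigma_E[of n v a "{}"] by (simp add: mono_E[symmetric] wedge_unit_right fin_mono)

lemma mono0: "mono 0 = wunit" by (simp add: mono_E wunit_E)

lemma sigma_wunit: "sigma n v wunit = wunit"
  using sigma_mono[of n v 0] by (simp add: mono0)

lemma var_mono: "var t = mono (Poly_Mapping.single t 1)" by (simp add: var_def)

lemma sigma_var: "sigma n v (var t) = var t" by (simp add: var_mono sigma_mono)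

lemma sigma_wl: "sigma n v (wedge_list xs) = wedge_list (map (sigma n v) xs)"
  by (induction xs) (simp_all add: sigma_wunit sigma_hom)

lemma desc_single: "desc {m} = [m]" by (simp add: desc_def)

lemma sigma_E_single: "sigma n a (E \<beta> {m}) = wedge (mono \<beta>) (sigma1 n a m)"
  by (simp add: sigma_E desc_single wedge_unit_right fin_sigma1)

lemma gen_E: "gen n k = (if enat k < n then E 0 {k} else 0)"
  by (auto simp: gen_def E_def fun_eq_iff)

lemma sigma1_big: "\<not> enat k < n \<Longrightarrow> sigma1 n v k = 0"
proof (intro ext)
  fix mu U assume "\<not> enat k < n"
  then show "sigma1 n v k mu U = 0 mu U"
    by (auto simp: sigma1_def) (meson enat_ord_simps(1) le_less_trans)
qed

lemma sigma_gen: "sigma n v (gen n k) = sigma1 n v k"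
proof (cases "enat k < n")
  case True
  then show ?thesis by (simp add: gen_E sigma_E_single mono0 wedge_unit_left fin_sigma1)
next
  case False
  then show ?thesis by (simp add: gen_E sigma1_big)
qed

lemma dv_eq: "(\<beta> \<in> dv mu \<and> mu - \<beta> = \<gamma>) \<longleftrightarrow> mu = \<beta> + \<gamma>"
proof
  assume a: "\<beta> \<in> dv mu \<and> mu - \<beta> = \<gamma>"
  then have "\<beta> + (mu - \<beta>) = mu" using dv_iff by blast
  then show "mu = \<beta> + \<gamma>" using a by simp
next
  assume "mu = \<beta> + \<gamma>"
  then show "\<beta> \<in> dv mu \<and> mu - \<beta> = \<gamma>" unfolding dv_def using dv_sub by auto
qed

lemma mono_wedge_val: "wedge (mono \<beta>) G mu U = (if finite U \<and> \<beta> \<in> dv mu then G (mu - \<beta>) U else 0)"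
  by (simp add: mono_E wedge_E_left)

lemma var_wedge_val: "wedge (var t) G mu U = (if finite U \<and> Poly_Mapping.single t 1 \<in> dv mu then G (mu - Poly_Mapping.single t 1) U else 0)"
  by (simp add: var_mono mono_wedge_val)

lemma Dop_sigma1: "sigma1 n t k - wedge (var t) (sigma1 n t (Suc k)) = gen n k"
proof (intro ext)
  fix mu U
  let ?e = "Poly_Mapping.single t (1::nat)"
  show "(sigma1 n t k - wedge (var t) (sigma1 n t (Suc k))) mu U = gen n k mu U"
  proof (cases "\<exists>m. U = {m}")
    case True
    then obtain m where U: "U = {m}" by blast
    show ?thesis
    proof (cases "k < m")
      case True
      have "(?e \<in> dv mu \<and> mu - ?e = Poly_Mapping.single t (m - Suc k)) \<longleftrightarrow> mu = ?e + Poly_Mapping.single t (m - Suc k)"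
        by (rule dv_eq)
      also have "?e + Poly_Mapping.single t (m - Suc k) = Poly_Mapping.single t (m - k)"
      proof -
        have "Suc (m - Suc k) = m - k" using True by arith
        then show ?thesis by (simp flip: single_add)
      qed
      finally have iff: "(?e \<in> dv mu \<and> mu - ?e = Poly_Mapping.single t (m - Suc k)) \<longleftrightarrow> mu = Poly_Mapping.single t (m - k)" .
      show ?thesis using True iff by (auto simp: U var_wedge_val sigma1_def gen_def)
    next
      case False
      then show ?thesis by (auto simp: U var_wedge_val sigma1_def gen_def)
    qed
  next
    case False
    then show ?thesis by (auto simp: var_wedge_val sigma1_def gen_def)
  qed
qed

definition Kc :: "nat \<Rightarrow> nat \<Rightarrow> nat \<Rightarrow> nat \<Rightarrow> (nat \<Rightarrow>\<^sub>0 nat) \<Rightarrow> rat" where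
  "Kc a b w M mu = (\<Sum>m\<in>{w..M}. if mu = Poly_Mapping.single b (m - w) + Poly_Mapping.single a (M - m) then 1 else 0)"

lemma Kc_sym: "Kc a b w M mu = Kc b a w M mu"
  unfolding Kc_def
  by (rule sum.reindex_bij_witness[where i="\<lambda>m. w + M - m" and j="\<lambda>m. w + M - m"])
     (auto simp: add.commute)

lemma sigma1_nz2: "sigma1 n b w \<beta> S \<noteq> 0 \<Longrightarrow> \<exists>m. S = {m} \<and> enat m < n \<and> w \<le> m \<and> \<beta> = Poly_Mapping.single b (m - w)"
  by (auto simp: sigma1_def split: if_splits)

lemma sigma_E1_val: "sigma n a (E \<beta> {m}) mu U =
   (if \<exists>M. U = {M} \<and> enat M < n \<and> m \<le> M \<and> mu = \<beta> + Poly_Mapping.single a (M - m) then 1 else 0)"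
proof -
  have "sigma n a (E \<beta> {m}) mu U = (if finite U \<and> \<beta> \<in> dv mu then sigma1 n a m (mu - \<beta>) U else 0)"
    by (simp add: sigma_E_single mono_wedge_val)
  also have "\<dots> = (if \<exists>M. U = {M} \<and> enat M < n \<and> m \<le> M \<and> mu = \<beta> + Poly_Mapping.single a (M - m) then 1 else 0)"
    using dv_eq[of \<beta> mu] by (auto simp: sigma1_def)
  finally show ?thesis .
qed

lemma sig_sig1_other:
  assumes "\<not> (\<exists>M. U = {M} \<and> enat M < n)"
  shows "sigma n a (sigma1 n b w) mu U = 0"
proof -
  obtain Q where Q0: "finite Q" "\<forall>F. sigma n a F mu U = (\<Sum>q\<in>Q. F (fst q) (snd q) * sigma n a (E (fst q) (snd q)) mu U)"
    using lin_lf_sigma[unfolded lin_lf_def, rule_format, of n a mu U] by (elim exE conjE)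
  have "sigma n a (sigma1 n b w) mu U = (\<Sum>q\<in>Q. sigma1 n b w (fst q) (snd q) * sigma n a (E (fst q) (snd q)) mu U)"
    using Q0(2) by blast
  also have "\<dots> = 0"
  proof (intro sum.neutral ballI)
    fix q assume "q \<in> Q"
    show "sigma1 n b w (fst q) (snd q) * sigma n a (E (fst q) (snd q)) mu U = 0"
    proof (cases "sigma1 n b w (fst q) (snd q) = 0")
      case False
      then obtain m where "snd q = {m}" using sigma1_nz2 by blast
      then show ?thesis using assms by (auto simp add: sigma_E1_val)
    qed simp
  qed
  finally show ?thesis .
qed

lemma sig_sig1_single:
  assumes M: "enat M < n"
  shows "sigma n a (sigma1 n b w) mu {M} = Kc a b w M mu"
proof -
  obtain Q where Q: "finite Q" "\<And>Q' F. finite Q' \<Longrightarrow> Q \<subseteq> Q' \<Longrightarrow>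
     sigma n a F mu {M} = (\<Sum>q\<in>Q'. F (fst q) (snd q) * sigma n a (E (fst q) (snd q)) mu {M})"
    by (rule lin_lf_sup[OF lin_lf_sigma, where mu=mu and U="{M}"]) blast
  define h where "h = (\<lambda>m. (Poly_Mapping.single b (m - w), {m::nat}))"
  define A where "A = h ` {w..M}"
  let ?g = "\<lambda>q. sigma1 n b w (fst q) (snd q) * sigma n a (E (fst q) (snd q)) mu {M}"
  have fA: "finite A" unfolding A_def by simp
  have "sigma n a (sigma1 n b w) mu {M} = sum ?g (Q \<union> A)"
    using Q(2)[of "Q \<union> A" "sigma1 n b w"] Q(1) fA by simp
  also have "\<dots> = sum ?g A"
  proof (rule sum.mono_neutral_right)
    show "finite (Q \<union> A)" using Q fA by simp
    show "A \<subseteq> Q \<union> A" by simp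
    show "\<forall>q\<in>Q \<union> A - A. ?g q = 0"
    proof
      fix q assume qA: "q \<in> Q \<union> A - A"
      show "?g q = 0"
      proof (rule ccontr)
        assume nz: "?g q \<noteq> 0"
        then have "sigma1 n b w (fst q) (snd q) \<noteq> 0" by auto
        then obtain m where m: "snd q = {m}" "w \<le> m" "fst q = Poly_Mapping.single b (m - w)"
          using sigma1_nz2 by blast
        then have "sigma n a (E (fst q) {m}) mu {M} \<noteq> 0" using nz by auto
        then have "m \<le> M" by (auto simp: sigma_E1_val split: if_splits)
        then have "q \<in> A" using m unfolding A_def h_def by (auto intro!: image_eqI[of _ _ m] simp: prod_eq_iff)
        then show False using qA by simp
      qed
    qed
  qed
  also have "\<dots> = sum (?g \<circ> h) {w..M}"
    unfolding A_def by (rule sum.reindex) (auto simp: h_def inj_on_def)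
  also have "\<dots> = Kc a b w M mu"
    unfolding Kc_def
  proof (intro sum.cong refl)
    fix m assume m: "m \<in> {w..M}"
    then have mn: "enat m < n" using M by (meson atLeastAtMost_iff enat_ord_simps(1) le_less_trans)
    have "sigma1 n b w (Poly_Mapping.single b (m - w)) {m} = 1" using m mn by (auto simp: sigma1_def)
    then show "(?g \<circ> h) m = (if mu = Poly_Mapping.single b (m - w) + Poly_Mapping.single a (M - m) then 1 else 0)"
      using m M by (auto simp: h_def sigma_E1_val)
  qed
  finally show ?thesis .
qed

lemma sig_sig1_comm: "sigma n a (sigma1 n b w) = sigma n b (sigma1 n a w)"
proof (intro ext)
  fix mu U
  show "sigma n a (sigma1 n b w) mu U = sigma n b (sigma1 n a w) mu U"
  proof (cases "\<exists>M. U = {M} \<and> enat M < n")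
    case True
    then obtain M where "U = {M}" "enat M < n" by blast
    then show ?thesis by (simp add: sig_sig1_single Kc_sym)
  next
    case False
    then show ?thesis by (simp add: sig_sig1_other)
  qed
qed

lemma sigma_comm: "sigma n a (sigma n b F) = sigma n b (sigma n a F)"
proof -
  have bas: "sigma n a (sigma n b (E c W)) = sigma n b (sigma n a (E c W))" for c W
    by (simp add: sigma_E sigma_hom sigma_mono sigma_wl sig_sig1_comm o_def)
  show ?thesis
    by (rule lin_lf_eq[where L="\<lambda>F. sigma n a (sigma n b F)" and M="\<lambda>F. sigma n b (sigma n a F)",
          OF lin_lf_comp[OF lin_lf_sigma lin_lf_sigma] lin_lf_comp[OF lin_lf_sigma lin_lf_sigma] bas])
qed

lemma lam_zero'[simp]: "(\<lambda>a b. 0::rat) = (0::ser)" by (simp add: fun_eq_iff)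
lemma lam_diff[simp]: "(\<lambda>a b. (A::ser) a b - B a b) = A - B" by (simp add: fun_eq_iff)
lemma lam_uminus[simp]: "(\<lambda>a b. - (A::ser) a b) = - A" by (simp add: fun_eq_iff)
lemma lam_add[simp]: "(\<lambda>a b. (A::ser) a b + B a b) = A + B" by (simp add: fun_eq_iff)

definition Dop :: "ser \<Rightarrow> (nat \<Rightarrow> ser) \<Rightarrow> nat \<Rightarrow> ser" where
  "Dop c u = (\<lambda>k. u k - wedge c (u (Suc k)))"

definition Dl :: "ser list \<Rightarrow> (nat \<Rightarrow> ser) \<Rightarrow> nat \<Rightarrow> ser" where
  "Dl cs u = foldr Dop cs u"

lemma Dl_Nil[simp]: "Dl [] u = u" by (simp add: Dl_def)
lemma Dl_Cons: "Dl (c # cs) u = Dop c (Dl cs u)" by (simp add: Dl_def)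

fun tri :: "ser \<Rightarrow> ser \<Rightarrow> ser list \<Rightarrow> ser list" where
  "tri c x [] = []"
| "tri c x (v # vs) = (v - wedge c x) # tri c v vs"

inductive_set spn :: "ser set \<Rightarrow> ser set" for G where
  spn0: "0 \<in> spn G"
| spnG: "g \<in> G \<Longrightarrow> g \<in> spn G"
| spnD: "a \<in> spn G \<Longrightarrow> b \<in> spn G \<Longrightarrow> a - b \<in> spn G"
| spnS: "deg0 c \<Longrightarrow> a \<in> spn G \<Longrightarrow> wedge c a \<in> spn G"

lemma spn_add: "a \<in> spn G \<Longrightarrow> b \<in> spn G \<Longrightarrow> a + b \<in> spn G"
proof -
  assume "a \<in> spn G" "b \<in> spn G"
  then have "a - (0 - b) \<in> spn G" by (intro spnD spn0)
  then show ?thesis by simp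
qed

lemma spn_mono: "s \<in> spn G \<Longrightarrow> G \<subseteq> H \<Longrightarrow> s \<in> spn H"
  by (induction rule: spn.induct) (auto intro: spn.intros)

lemma ssub_eq: "ssub A B = A - B" by (simp add: ssub_def fun_eq_iff)

lemma deg1_diff: "deg1 x \<Longrightarrow> deg1 y \<Longrightarrow> deg1 (x - y)" by (simp add: deg1_def)
lemma deg0_diff: "deg0 x \<Longrightarrow> deg0 y \<Longrightarrow> deg0 (x - y)" by (simp add: deg0_def)

lemma deg1_wedge0:
  assumes c: "deg0 c" and x: "deg1 x" shows "deg1 (wedge c x)"
  unfolding deg1_def
proof (intro allI impI)
  fix mu :: "nat \<Rightarrow>\<^sub>0 nat" and U :: "nat set" assume U: "card U \<noteq> 1"
  show "wedge c x mu U = 0"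
  proof (cases "finite U")
    case True
    have "wedge c x mu U = (\<Sum>a\<in>dv mu. \<Sum>S\<in>Pow U. wsign S (U - S) * c a S * x (mu - a) (U - S))"
      using True by (simp add: wedge_alt)
    also have "\<dots> = 0"
    proof (intro sum.neutral ballI)
      fix a S assume "S \<in> Pow U"
      show "wsign S (U - S) * c a S * x (mu - a) (U - S) = 0"
      proof (cases "S = {}")
        case True then show ?thesis using x U by (simp add: deg1_def)
      next
        case False then show ?thesis using c by (simp add: deg0_def)
      qed
    qed
    finally show ?thesis .
  qed (simp add: wedge_def)
qed

lemma deg0_wedge:
  assumes c: "deg0 c" and x: "deg0 x" shows "deg0 (wedge c x)"
  unfolding deg0_def
proof (intro allI impI)
  fix mu :: "nat \<Rightarrow>\<^sub>0 nat" and U :: "nat set" assume U: "U \<noteq> {}"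
  show "wedge c x mu U = 0"
  proof (cases "finite U")
    case True
    have "wedge c x mu U = (\<Sum>a\<in>dv mu. \<Sum>S\<in>Pow U. wsign S (U - S) * c a S * x (mu - a) (U - S))"
      using True by (simp add: wedge_alt)
    also have "\<dots> = 0"
    proof (intro sum.neutral ballI)
      fix a S assume "S \<in> Pow U"
      show "wsign S (U - S) * c a S * x (mu - a) (U - S) = 0"
      proof (cases "S = {}")
        case True then show ?thesis using x U by (simp add: deg0_def)
      next
        case False then show ?thesis using c by (simp add: deg0_def)
      qed
    qed
    finally show ?thesis .
  qed (simp add: wedge_def)
qed

lemma deg0_wunit: "deg0 wunit" by (simp add: deg0_def wunit_def)

lemma deg0_wl: "\<forall>x\<in>set xs. deg0 x \<Longrightarrow> deg0 (wedge_list xs)"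
  by (induction xs) (simp_all add: deg0_wunit deg0_wedge)

lemma central_swap: "deg0 c \<Longrightarrow> wedge x (wedge c Y) = wedge c (wedge x Y)"
proof -
  assume c: "deg0 c"
  have "wedge x (wedge c Y) = wedge (wedge x c) Y" by (simp add: wedge_assoc)
  also have "wedge x c = wedge c x" using central[OF c] by simp
  finally show ?thesis by (simp add: wedge_assoc)
qed

lemma Dop_deg1: "deg0 c \<Longrightarrow> \<forall>k. deg1 (u k) \<Longrightarrow> deg1 (Dop c u k)"
  by (simp add: Dop_def deg1_diff deg1_wedge0)

lemma Dl_deg1: "\<forall>c\<in>set cs. deg0 c \<Longrightarrow> \<forall>k. deg1 (u k) \<Longrightarrow> deg1 (Dl cs u k)"
proof (induction cs arbitrary: k)
  case Nil then show ?case by simp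
next
  case (Cons c cs)
  then show ?case by (simp add: Dl_Cons Dop_deg1)
qed

lemma Dop_comm:
  assumes a: "deg0 a" and b: "deg0 b" shows "Dop a (Dop b u) = Dop b (Dop a u)"
proof (rule ext)
  fix k
  have s: "wedge a (wedge b X) = wedge b (wedge a X)" for X
    using central_swap[OF b, of a X] .
  show "Dop a (Dop b u) k = Dop b (Dop a u) k"
    by (simp add: Dop_def wedge_diff_right s algebra_simps)
qed

lemma Dl_Dop: "deg0 c \<Longrightarrow> \<forall>x\<in>set cs. deg0 x \<Longrightarrow> Dl cs (Dop c u) = Dop c (Dl cs u)"
  by (induction cs) (simp_all add: Dl_Cons Dop_comm)

lemma Dl_L:
  assumes "\<And>c x y. c \<in> set cs \<Longrightarrow> L (x - wedge c y) = L x - wedge c (L y)"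
  shows "Dl cs (\<lambda>k. L (u k)) = (\<lambda>k. L (Dl cs u k))"
  using assms
proof (induction cs)
  case Nil then show ?case by simp
next
  case (Cons c cs)
  then have IH: "Dl cs (\<lambda>k. L (u k)) = (\<lambda>k. L (Dl cs u k))" by simp
  show ?case by (rule ext) (simp add: Dl_Cons IH Dop_def Cons.prems)
qed

lemma tri_lemma:
  assumes c: "deg0 c" and x: "deg1 x" and vs: "\<forall>v\<in>set vs. deg1 v"
  shows "wedge x (wedge_list (tri c x vs @ ws)) = wedge x (wedge_list (vs @ ws))"
  using x vs
proof (induction vs arbitrary: x)
  case Nil then show ?case by simp
next
  case (Cons v vs)
  have IH: "wedge v (wedge_list (tri c v vs @ ws)) = wedge v (wedge_list (vs @ ws))"
    using Cons by simp
  let ?W = "wedge_list (tri c v vs @ ws)"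
  have z: "wedge x (wedge (wedge c x) ?W) = 0"
  proof -
    have "wedge x (wedge (wedge c x) ?W) = wedge x (wedge c (wedge x ?W))" by (simp add: wedge_assoc)
    also have "\<dots> = wedge c (wedge (wedge x x) ?W)" by (simp add: central_swap[OF c] wedge_assoc)
    also have "\<dots> = 0" using wedge_self[OF Cons.prems(1)] by simp
    finally show ?thesis .
  qed
  have "wedge x (wedge_list (tri c x (v # vs) @ ws)) = wedge x (wedge (v - wedge c x) ?W)" by simp
  also have "\<dots> = wedge x (wedge v ?W) - wedge x (wedge (wedge c x) ?W)"
    by (simp add: wedge_diff_left wedge_diff_right)
  also have "\<dots> = wedge x (wedge v (wedge_list (vs @ ws)))" using z IH by simp
  finally show ?case by simp
qed

lemma tri_map: "tri c (v k) (map v (rev [0..<k])) = map (\<lambda>i. v i - wedge c (v (Suc i))) (rev [0..<k])"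
  by (induction k) simp_all

lemma spn_zero_wedge:
  assumes "s \<in> spn G" "G \<subseteq> set ws" "\<forall>w\<in>set ws. deg1 w"
  shows "wedge s (wedge_list ws) = 0"
  using assms
proof (induction rule: spn.induct)
  case spn0 then show ?case by simp
next
  case (spnG g) then show ?case using wl_mem_zero by blast
next
  case (spnD a b) then show ?case by (simp add: wedge_diff_left)
next
  case (spnS c a) then show ?case by (simp add: wedge_assoc)
qed

lemma fin_deg1_R: "deg1 x \<Longrightarrow> fin x" by (auto simp: fin_def deg1_def)

lemma Dl_span:
  assumes z: "deg0 z" and ts: "\<forall>t\<in>set ts. deg0 t" and u: "\<forall>k. deg1 (u k)"
  shows "Dl ts u m - wedge (wedge_list (map (ssub z) ts)) (u (m + length ts)) \<in> spn (Dop z u ` {m..<m + length ts})"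
  using ts
proof (induction ts arbitrary: m)
  case Nil
  have "wedge wunit (u m) = u m" by (rule wedge_unit_left[OF fin_deg1_R]) (use u in blast)
  then show ?case by (simp add: spn0)
next
  case (Cons t ts)
  let ?P = "wedge_list (map (ssub z) ts)"
  let ?r = "length ts"
  let ?G = "Dop z u ` {m..<m + Suc ?r}"
  have t: "deg0 t" and ts': "\<forall>t\<in>set ts. deg0 t" using Cons.prems by auto
  have P0: "deg0 ?P" using ts' z by (intro deg0_wl) (auto simp: ssub_eq deg0_diff)
  define s1 where "s1 = Dl ts u m - wedge ?P (u (m + ?r))"
  define s2 where "s2 = Dl ts u (Suc m) - wedge ?P (u (Suc m + ?r))"
  have s1: "s1 \<in> spn ?G"
    using Cons.IH[OF ts', of m] unfolding s1_def by (rule spn_mono) auto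
  have s2: "s2 \<in> spn ?G"
    using Cons.IH[OF ts', of "Suc m"] unfolding s2_def by (rule spn_mono) auto
  have g: "Dop z u (m + ?r) \<in> spn ?G" by (intro spnG) auto
  have mem: "s1 - wedge t s2 + wedge ?P (Dop z u (m + ?r)) \<in> spn ?G"
    by (intro spn_add spnD spnS s1 s2 g t P0)
  let ?u' = "u (Suc m + ?r)"
  have e1: "wedge (wedge z ?P) ?u' = wedge ?P (wedge z ?u')"
    by (simp add: wedge_assoc central_swap[OF z])
  have e2: "wedge (wedge t ?P) ?u' = wedge t (wedge ?P ?u')"
    by (simp add: wedge_assoc)
  have "Dl (t # ts) u m - wedge (wedge_list (map (ssub z) (t # ts))) (u (m + length (t # ts)))
      = Dl ts u m - wedge t (Dl ts u (Suc m)) - wedge (wedge (z - t) ?P) ?u'"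
    by (simp add: Dl_Cons Dop_def ssub_eq)
  also have "\<dots> = Dl ts u m - wedge t (Dl ts u (Suc m)) - wedge (wedge z ?P) ?u' + wedge (wedge t ?P) ?u'"
    by (simp add: wedge_diff_left)
  also have "\<dots> = s1 - wedge t s2 + wedge ?P (Dop z u (m + ?r))"
    unfolding e1 e2 s1_def s2_def Dop_def
    by (simp add: wedge_diff_right wedge_diff_left algebra_simps)
  finally have eq: "Dl (t # ts) u m - wedge (wedge_list (map (ssub z) (t # ts))) (u (m + length (t # ts)))
      = s1 - wedge t s2 + wedge ?P (Dop z u (m + ?r))" .
  have st: "{m..<m + length (t # ts)} = {m..<m + Suc ?r}" by simp
  show ?case unfolding eq st by (rule mem)
qed

lemma res:
  assumes u: "\<forall>k. deg1 (u k)" and zs: "\<forall>z\<in>set zs. deg0 z" and ts: "\<forall>t\<in>set ts. deg0 t"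
  shows "wedge_list (map (Dl ts u) (rev [0..<length zs]) @ map (Dl zs u) (rev [0..<length ts]))
       = wedge (wedge_list (concat (map (\<lambda>z. map (ssub z) ts) zs))) (wedge_list (map u (rev [0..<length zs + length ts])))"
  using u zs
proof (induction zs arbitrary: u)
  case Nil
  then show ?case by (simp add: wedge_unit_left fin_wl)
next
  case (Cons z zs)
  have z: "deg0 z" and zs': "\<forall>z\<in>set zs. deg0 z" using Cons.prems by auto
  have u: "\<forall>k. deg1 (u k)" using Cons.prems by auto
  let ?h = "length zs" and ?r = "length ts"
  define u' where "u' = Dop z u"
  have u'1: "\<forall>k. deg1 (u' k)" unfolding u'_def using z u by (simp add: Dop_deg1)
  let ?R = "wedge_list (concat (map (\<lambda>z. map (ssub z) ts) zs))"
  let ?P = "wedge_list (map (ssub z) ts)"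
  have R0: "deg0 ?R" using zs' ts by (intro deg0_wl) (auto simp: ssub_eq deg0_diff)
  have P0: "deg0 ?P" using z ts by (intro deg0_wl) (auto simp: ssub_eq deg0_diff)
  have IH: "wedge_list (map (Dl ts u') (rev [0..<?h]) @ map (Dl zs u') (rev [0..<?r]))
       = wedge ?R (wedge_list (map u' (rev [0..<?h + ?r])))"
    using Cons.IH[OF u'1 zs'] .
  have Dz: "Dl (z # zs) u = Dl zs u'" unfolding u'_def by (simp add: Dl_Cons Dl_Dop[OF z zs'])
  have Dt: "Dl ts u' = Dop z (Dl ts u)" unfolding u'_def by (rule Dl_Dop[OF z ts])
  let ?x = "Dl ts u ?h"
  let ?B = "map (Dl zs u') (rev [0..<?r])"
  let ?vs = "map (Dl ts u) (rev [0..<?h])"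
  have x1: "deg1 ?x" using ts u by (simp add: Dl_deg1)
  have vs1: "\<forall>v\<in>set ?vs. deg1 v" using ts u by (auto simp: Dl_deg1)
  have tri1: "tri z ?x ?vs = map (Dl ts u') (rev [0..<?h])"
    unfolding Dt using tri_map[of z "Dl ts u" ?h] by (simp add: Dop_def)
  let ?W' = "wedge_list (map u' (rev [0..<?h + ?r]))"
  have "wedge_list (map (Dl ts u) (rev [0..<length (z # zs)]) @ map (Dl (z # zs) u) (rev [0..<?r]))
      = wedge ?x (wedge_list (?vs @ ?B))"
    by (simp add: Dz)
  also have "\<dots> = wedge ?x (wedge_list (tri z ?x ?vs @ ?B))"
    by (rule tri_lemma[OF z x1 vs1, symmetric])
  also have "\<dots> = wedge ?x (wedge ?R ?W')" unfolding tri1 IH ..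
  also have "\<dots> = wedge ?R (wedge ?x ?W')" by (rule central_swap[OF R0])
  also have "wedge ?x ?W' = wedge (wedge ?P (u (?h + ?r))) ?W'"
  proof -
    have sp: "?x - wedge ?P (u (?h + ?r)) \<in> spn (Dop z u ` {?h..<?h + ?r})"
      by (rule Dl_span[OF z ts u])
    have sub: "Dop z u ` {?h..<?h + ?r} \<subseteq> set (map u' (rev [0..<?h + ?r]))"
      unfolding u'_def by auto
    have "wedge (?x - wedge ?P (u (?h + ?r))) ?W' = 0"
      by (rule spn_zero_wedge[OF sp sub]) (use u'1 in auto)
    then show ?thesis by (simp add: wedge_diff_left)
  qed
  also have "wedge (wedge ?P (u (?h + ?r))) ?W' = wedge ?P (wedge (u (?h + ?r)) ?W')"
    by (rule wedge_assoc)
  also have "wedge (u (?h + ?r)) ?W' = wedge_list (map u (rev [0..<Suc (?h + ?r)]))"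
  proof -
    have "map u' (rev [0..<?h + ?r]) = tri z (u (?h + ?r)) (map u (rev [0..<?h + ?r]))"
      unfolding u'_def using tri_map[of z u "?h + ?r"] by (simp add: Dop_def)
    then have "wedge (u (?h + ?r)) ?W' = wedge (u (?h + ?r)) (wedge_list (tri z (u (?h + ?r)) (map u (rev [0..<?h + ?r])) @ []))"
      by simp
    also have "\<dots> = wedge (u (?h + ?r)) (wedge_list (map u (rev [0..<?h + ?r]) @ []))"
      by (rule tri_lemma[OF z]) (use u in auto)
    finally show ?thesis by simp
  qed
  also have "wedge ?R (wedge ?P (wedge_list (map u (rev [0..<Suc (?h + ?r)]))))
      = wedge (wedge ?P ?R) (wedge_list (map u (rev [0..<Suc (?h + ?r)])))"
    by (simp add: central_swap[OF P0] wedge_assoc)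
  finally show ?case by (simp add: wl_append)
qed

lemma sigmas_Nil[simp]: "sigmas n [] F = F" by (simp add: sigmas_def)
lemma sigmas_Cons[simp]: "sigmas n (v # vs) F = sigma n v (sigmas n vs F)" by (simp add: sigmas_def)

lemma Dl_cancel: "Dl (map var vs) (\<lambda>k. sigmas n vs (gen n k)) = gen n"
proof (induction vs)
  case Nil then show ?case by (simp add: fun_eq_iff)
next
  case (Cons t vs)
  have L: "sigma n t (x - wedge c y) = sigma n t x - wedge c (sigma n t y)" if "c \<in> set (map var vs)" for c x y
    using that by (auto simp: sigma_diff sigma_hom sigma_var)
  have e1: "Dl (map var vs) (\<lambda>k. sigma n t (sigmas n vs (gen n k))) = (\<lambda>k. sigma n t (Dl (map var vs) (\<lambda>k. sigmas n vs (gen n k)) k))"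
    by (rule Dl_L[where L="sigma n t" and u="\<lambda>k. sigmas n vs (gen n k)"]) (rule L)
  have e2: "(\<lambda>k. sigma n t (Dl (map var vs) (\<lambda>k. sigmas n vs (gen n k)) k)) = sigma1 n t"
    by (rule ext) (simp add: Cons.IH sigma_gen)
  have e3: "Dop (var t) (sigma1 n t) = gen n"
  proof (rule ext)
    fix k show "Dop (var t) (sigma1 n t) k = gen n k" unfolding Dop_def by (rule Dop_sigma1)
  qed
  have "Dl (map var (t # vs)) (\<lambda>k. sigmas n (t # vs) (gen n k))
      = Dop (var t) (Dl (map var vs) (\<lambda>k. sigma n t (sigmas n vs (gen n k))))"
    by (simp only: list.map Dl_Cons sigmas_Cons)
  then show ?case by (simp only: e1 e2 e3)
qed

lemma sigma_P1: "sigma n v (P1 F) = P1 (sigma n v (P1 F))"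
proof -
  have b: "sigma n v (P1 (E a S)) = P1 (sigma n v (P1 (E a S)))" for a S
  proof (cases "card S = 1")
    case True
    then obtain s where S: "S = {s}" by (auto simp: card_Suc_eq)
    have d: "deg1 (wedge (mono a) (sigma1 n v s))" by (rule deg1_wedge0[OF deg0_mono deg1_sigma1])
    have "P1 (E a S) = E a {s}" using S by (simp add: P1_E)
    then show ?thesis using deg1_P1[OF d] by (simp add: sigma_E_single)
  next
    case False
    then have "P1 (E a S) = 0" by (simp add: P1_E)
    then show ?thesis using lin_lf_zero[OF lin_lf_P1] by simp
  qed
  show ?thesis
    by (rule lin_lf_eq[where L="\<lambda>F. sigma n v (P1 F)" and M="\<lambda>F. P1 (sigma n v (P1 F))",
          OF lin_lf_comp[OF lin_lf_sigma lin_lf_P1] lin_lf_comp[OF lin_lf_P1 lin_lf_comp[OF lin_lf_sigma lin_lf_P1]] b])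
qed

lemma sigmas_append: "sigmas n (xs @ ys) F = sigmas n xs (sigmas n ys F)" by (simp add: sigmas_def)

lemma sigmas_hom: "sigmas n vs (wedge A B) = wedge (sigmas n vs A) (sigmas n vs B)"
  by (induction vs) (simp_all add: sigma_hom)
lemma sigmas_diff: "sigmas n vs (A - B) = sigmas n vs A - sigmas n vs B"
  by (induction vs) (simp_all add: sigma_diff)
lemma sigmas_var: "sigmas n vs (var t) = var t"
  by (induction vs) (simp_all add: sigma_var)
lemma sigmas_wunit: "sigmas n vs wunit = wunit"
  by (induction vs) (simp_all add: sigma_wunit)
lemma sigmas_wl: "sigmas n vs (wedge_list xs) = wedge_list (map (sigmas n vs) xs)"
  by (induction xs) (simp_all add: sigmas_wunit sigmas_hom)

lemma sigmas_Xvac: "sigmas n vs (Xvac n k) = wedge_list (map (\<lambda>i. sigmas n vs (gen n i)) (rev [0..<k]))"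
  by (simp add: Xvac_def sigmas_wl o_def)

lemma sigma_sigmas_comm: "sigma n a (sigmas n vs F) = sigmas n vs (sigma n a F)"
  by (induction vs) (simp_all add: sigma_comm)

lemma sigmas_comm: "sigmas n xs (sigmas n ys F) = sigmas n ys (sigmas n xs F)"
proof (induction xs)
  case Nil then show ?case by simp
next
  case (Cons x xs)
  then show ?case by (simp add: sigma_sigmas_comm)
qed

lemma deg1_P1': "deg1 (P1 X)" by (simp add: deg1_def P1_def)

lemma deg1_sigma: "deg1 F \<Longrightarrow> deg1 (sigma n v F)"
  using sigma_P1[of n v F] deg1_P1[of F] deg1_P1'[of "sigma n v (P1 F)"] by simp

lemma deg1_gen: "deg1 (gen n k)" by (simp add: deg1_def gen_def)

lemma deg1_sigmas_gen: "deg1 (sigmas n vs (gen n k))"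
  by (induction vs) (simp_all add: deg1_gen deg1_sigma)

lemma deg0_var: "deg0 (var t)" by (simp add: var_mono deg0_mono)

lemma sigmas_L: "c \<in> set (map var ws) \<Longrightarrow> sigmas n vs (x - wedge c y) = sigmas n vs x - wedge c (sigmas n vs y)"
  by (auto simp: sigmas_diff sigmas_hom sigmas_var)

lemma upt_shift: "[h..<h + r] = map (\<lambda>j. h + j) [0..<r]"
  by (induction r) simp_all

theorem mainTheorem10:
  fixes n :: enat and h r :: nat
  assumes "n \<ge> 1" and "h \<ge> 1" and "r \<ge> 1" and "enat (h + r) \<le> n"
  shows "wedge (sigmas n [0..<h] (Xvac n h)) (sigmas n [h..<h + r] (Xvac n r))
       = wedge (wedge_list [ssub (var i) (var (h + j)). i \<leftarrow> [0..<h], j \<leftarrow> [0..<r]])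
               (sigmas n [0..<h + r] (Xvac n (h + r)))"
proof -
  let ?zI = "[0..<h]" and ?tI = "[h..<h + r]"
  define u where "u = (\<lambda>k. sigmas n [0..<h + r] (gen n k))"
  have split: "[0..<h + r] = ?zI @ ?tI" by (rule upt_add_eq_append) simp
  have u1: "u = (\<lambda>k. sigmas n ?zI (sigmas n ?tI (gen n k)))" unfolding u_def split by (simp only: sigmas_append)
  have u2: "u = (\<lambda>k. sigmas n ?tI (sigmas n ?zI (gen n k)))" unfolding u1 by (rule ext) (rule sigmas_comm)
  have A: "Dl (map var ?tI) u = (\<lambda>k. sigmas n ?zI (gen n k))"
  proof -
    have "Dl (map var ?tI) u = (\<lambda>k. sigmas n ?zI (Dl (map var ?tI) (\<lambda>k. sigmas n ?tI (gen n k)) k))"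
      unfolding u1 by (rule Dl_L[where L="sigmas n ?zI" and u="\<lambda>k. sigmas n ?tI (gen n k)"]) (rule sigmas_L)
    then show ?thesis by (simp only: Dl_cancel)
  qed
  have B: "Dl (map var ?zI) u = (\<lambda>k. sigmas n ?tI (gen n k))"
  proof -
    have "Dl (map var ?zI) u = (\<lambda>k. sigmas n ?tI (Dl (map var ?zI) (\<lambda>k. sigmas n ?zI (gen n k)) k))"
      unfolding u2 by (rule Dl_L[where L="sigmas n ?tI" and u="\<lambda>k. sigmas n ?zI (gen n k)"]) (rule sigmas_L)
    then show ?thesis by (simp only: Dl_cancel)
  qed
  have u_deg: "\<forall>k. deg1 (u k)" unfolding u_def by (simp add: deg1_sigmas_gen)
  have lz: "length (map var ?zI) = h" and lt: "length (map var ?tI) = r" by simp_all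
  have "wedge (sigmas n [0..<h] (Xvac n h)) (sigmas n [h..<h + r] (Xvac n r))
      = wedge (wedge_list (map (Dl (map var ?tI) u) (rev [0..<h]))) (wedge_list (map (Dl (map var ?zI) u) (rev [0..<r])))"
    unfolding A B by (simp only: sigmas_Xvac)
  also have "\<dots> = wedge_list (map (Dl (map var ?tI) u) (rev [0..<length (map var ?zI)]) @ map (Dl (map var ?zI) u) (rev [0..<length (map var ?tI)]))"
    unfolding lz lt by (rule wl_append[symmetric])
  also have "\<dots> = wedge (wedge_list (concat (map (\<lambda>z. map (ssub z) (map var ?tI)) (map var ?zI))))
                      (wedge_list (map u (rev [0..<length (map var ?zI) + length (map var ?tI)])))"
    by (rule res) (auto simp: u_deg deg0_var)
  also have "concat (map (\<lambda>z. map (ssub z) (map var ?tI)) (map var ?zI)) = [ssub (var i) (var (h + j)). i \<leftarrow> [0..<h], j \<leftarrow> [0..<r]]"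
  proof -
    have tv: "map var [h..<h + r] = map (\<lambda>j. var (h + j)) [0..<r]" by (induction r) simp_all
    show ?thesis unfolding tv by (simp add: map_map o_def)
  qed
  also have "wedge_list (map u (rev [0..<length (map var ?zI) + length (map var ?tI)])) = sigmas n [0..<h + r] (Xvac n (h + r))"
    unfolding lz lt sigmas_Xvac u_def ..
  finally show ?thesis .
qed

end
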